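(* Let $G$ be a graph on $[n+1]$ satisfying the standing assumptions below, let ${\bf a}=(a_1,\ldots,a_n,-\sum a_i)$ with $a_i\in\mathbb{Z}_{\ge0}$, and let ${\bf m}=(m_1,\ldots,m_n)$ be a tuple of positive integers such that $G({\bf m})$ appears as a leaf of the canonical compounded reduction tree of $\mathcal{F}_G({\bf a})$. Then the number of leaves of that tree equal to $G({\bf m})$ is \[ K_G(m_1-{\rm outd}_1,m_2-{\rm outd}_2,\ldots,m_n-{\rm outd}_n,0), \] where ${\rm outd}_i$ is the outdegree of vertex $i$ in $G$.
   Context: Standing assumptions: $G$ is a connected directed multigraph without loops on $[n+1]$, edges directed $i\to j$ with $i<j$, each vertex $1,\ldots,n$ has an outgoing edge. $G({\bf m})$ denotes the graph on $[n+1]$ with exactly $m_i$ copies of the edge $(i,n+1)$ for each $i$ and no other edges. $K_H({\bf v})$ is the number of $f\in\mathbb{Z}_{\ge0}^{E(H)}$ with outflow minus inflow at each vertex $k$ equal to $v_k$. Noncrossing trees: for ordered lists $L=(x_1,\ldots,x_\ell)$, $R=(y_1,\ldots,y_r)$, $\mathcal{T}_{L,R}$ is the set of trees on $L\sqcup R$ with all edges between $L$ and $R$ and no two edges $(x_p,y_q),(x_t,y_u)$ with $p<t$, $q>u$. Compounded reduction at vertex $i\in\{2,\ldots,n\}$ of a graph $H$ in which $i$ has incoming edges: with $\mathcal{I}_i(H)$, $\mathcal{O}_i(H)$ the multisets of edges $(\cdot,i)$, $(i,\cdot)$ in fixed orderings, put $L=\mathcal{I}_i(H)$ if $a_i=0$,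 $L=(\mathcal{I}_i(H),v_i)$ ($v_i$ a new symbol placed last) if $a_i>0$, $R=\mathcal{O}_i(H)$; for $T\in\mathcal{T}_{L,R}$, $H^{(i)}_T$ is obtained from $H$ by deleting $\mathcal{I}_i(H)\cup\mathcal{O}_i(H)$, adding an edge $(r,s)$ for each tree edge joining $(r,i)$ and $(i,s)$, an edge $(i,s)$ for each tree edge joining $v_i$ and $(i,s)$, and, if $a_i=0$, one edge $(i,n+1)$. The canonical compounded reduction tree of $\mathcal{F}_G({\bf a})$ is the rooted tree with root $G$ obtained by, for $i=n,n-1,\ldots,2$ in this order, giving every current leaf $H$ in which vertex $i$ has incoming edges the children $H^{(i)}_T$, $T\in\mathcal{T}_{L,R}$ (one child per tree $T$). *)

theory Defs
  imports Main "HOL-Library.Multiset" "HOL-Library.Product_Lexorder"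
begin

type_synonym edge = "nat \<times> nat"
type_synonym graph = "edge multiset"

definition standing :: "nat \<Rightarrow> graph \<Rightarrow> bool" where
  "standing n G \<longleftrightarrow>
     (\<forall>e \<in># G. 1 \<le> fst e \<and> fst e < snd e \<and> snd e \<le> n + 1) \<and>
     (\<forall>u \<in> {1..n+1}. \<forall>v \<in> {1..n+1}.
        (u, v) \<in> (set_mset G \<union> (set_mset G)\<inverse>)\<^sup>*) \<and>
     (\<forall>i \<in> {1..n}. \<exists>e \<in># G. fst e = i)"

definition outd :: "graph \<Rightarrow> nat \<Rightarrow> nat" where
  "outd G i = size (filter_mset (\<lambda>e. fst e = i) G)"

definition Gm :: "nat \<Rightarrow> (nat \<Rightarrow> nat) \<Rightarrow> graph" where
  "Gm n m = sum_mset (image_mset (\<lambda>i. replicate_mset (m i) (i, n + 1)) (mset_set {1..n}))"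

text \<open>K_H(v): integer flows, one nonnegative value per edge copy; the copies are
  enumerated by the sorted list of the multiset.\<close>
definition netflow :: "graph \<Rightarrow> (nat \<Rightarrow> nat) \<Rightarrow> nat \<Rightarrow> int" where
  "netflow H f k =
     (let es = sorted_list_of_multiset H in
       (\<Sum>j \<in> {j. j < length es \<and> fst (es ! j) = k}. int (f j))
     - (\<Sum>j \<in> {j. j < length es \<and> snd (es ! j) = k}. int (f j)))"

definition K :: "nat \<Rightarrow> graph \<Rightarrow> (nat \<Rightarrow> int) \<Rightarrow> nat" where
  "K n H v = card {f :: nat \<Rightarrow> nat. (\<forall>j \<ge> size H. f j = 0) \<and>
                     (\<forall>k \<in> {1..n+1}. netflow H f k = v k)}"

text \<open>Noncrossing trees on L = positions {..<l}, R = positions {..<r}: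
  a tree edge (p,q) joins the p-th element of L with the q-th element of R.\<close>
definition bip_connected :: "nat \<Rightarrow> nat \<Rightarrow> (nat \<times> nat) set \<Rightarrow> bool" where
  "bip_connected l r T \<longleftrightarrow>
     (let E = {(Inl p, Inr q) | p q. (p, q) \<in> T};
          V = (Inl ` {..<l} \<union> Inr ` {..<r}) :: (nat + nat) set
      in \<forall>x \<in> V. \<forall>y \<in> V. (x, y) \<in> (E \<union> E\<inverse>)\<^sup>*)"

definition nc_trees :: "nat \<Rightarrow> nat \<Rightarrow> (nat \<times> nat) set set" where
  "nc_trees l r = {T. T \<subseteq> {..<l} \<times> {..<r} \<and> card T + 1 = l + r \<and> bip_connected l r T \<and>
      (\<forall>p q t u. (p, q) \<in> T \<longrightarrow> (t, u) \<in> T \<longrightarrow> p < t \<longrightarrow> \<not> u < q)}"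

text \<open>Compounded reduction at vertex i. Ls, Rs are the fixed orderings of the incoming
  and outgoing edges of i; if a i > 0 the extra symbol v_i is position length Ls of L.\<close>
definition reduce_child ::
  "nat \<Rightarrow> (nat \<Rightarrow> nat) \<Rightarrow> edge list \<Rightarrow> edge list \<Rightarrow> graph \<Rightarrow> nat \<Rightarrow> (nat \<times> nat) set \<Rightarrow> graph" where
  "reduce_child n a Ls Rs H i T =
     (H - mset Ls - mset Rs)
     + image_mset (\<lambda>(p, q). if p < length Ls then (fst (Ls ! p), snd (Rs ! q))
                                         else (i, snd (Rs ! q))) (mset_set T)
     + (if a i = 0 then {#(i, n + 1)#} else {#})"

definition reduce_children ::
  "nat \<Rightarrow> (nat \<Rightarrow> nat) \<Rightarrow> (graph \<Rightarrow> nat \<Rightarrow> edge list) \<Rightarrow> (graph \<Rightarrow> nat \<Rightarrow> edge list)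
     \<Rightarrow> nat \<Rightarrow> graph \<Rightarrow> graph multiset" where
  "reduce_children n a ordI ordO i H =
     (let Ls = ordI H i; Rs = ordO H i in
       image_mset (reduce_child n a Ls Rs H i)
         (mset_set (nc_trees (length Ls + (if a i > 0 then 1 else 0)) (length Rs))))"

definition reduce_step ::
  "nat \<Rightarrow> (nat \<Rightarrow> nat) \<Rightarrow> (graph \<Rightarrow> nat \<Rightarrow> edge list) \<Rightarrow> (graph \<Rightarrow> nat \<Rightarrow> edge list)
     \<Rightarrow> nat \<Rightarrow> graph multiset \<Rightarrow> graph multiset" where
  "reduce_step n a ordI ordO i Hs =
     sum_mset (image_mset (\<lambda>H. if (\<exists>e \<in># H. snd e = i) then reduce_children n a ordI ordO i H
                               else {#H#}) Hs)"

definition canon_leaves ::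
  "nat \<Rightarrow> (nat \<Rightarrow> nat) \<Rightarrow> (graph \<Rightarrow> nat \<Rightarrow> edge list) \<Rightarrow> (graph \<Rightarrow> nat \<Rightarrow> edge list)
     \<Rightarrow> graph \<Rightarrow> graph multiset" where
  "canon_leaves n a ordI ordO G =
     foldl (\<lambda>Hs i. reduce_step n a ordI ordO i Hs) {#G#} (rev [2..<Suc n])"

end

theory Submission
  imports Defs
begin


definition chainT :: "(nat \<times> nat) set \<Rightarrow> bool" where
  "chainT T \<longleftrightarrow> (\<forall>p q t u. (p, q) \<in> T \<longrightarrow> (t, u) \<in> T \<longrightarrow> p < t \<longrightarrow> \<not> u < q)"

definition FC :: "nat \<Rightarrow> nat \<Rightarrow> (nat \<times> nat) set \<Rightarrow> bool" where
  "FC l k T \<longleftrightarrow> T \<subseteq> {..<l} \<times> {..<k} \<and> chainT T \<and> card T + 1 = l + k"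

definition incL :: "(nat \<times> nat) set \<Rightarrow> (nat \<times> nat) set" where
  "incL T = (\<lambda>(p, q). (Suc p, q)) ` T"
definition incR :: "(nat \<times> nat) set \<Rightarrow> (nat \<times> nat) set" where
  "incR T = (\<lambda>(p, q). (p, Suc q)) ` T"

lemma incL_mem: "(p, q) \<in> incL T \<longleftrightarrow> p > 0 \<and> (p - 1, q) \<in> T"
  unfolding incL_def by (cases p) force+
lemma incR_mem: "(p, q) \<in> incR T \<longleftrightarrow> q > 0 \<and> (p, q - 1) \<in> T"
  unfolding incR_def by (cases q) force+

lemma chain_inj: "chainT T \<Longrightarrow> inj_on (\<lambda>(p, q). p + q) T"
  unfolding inj_on_def chainT_def
  by (clarsimp, metis add_less_mono add_less_mono1 le_neq_implies_less nat_le_linear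
       nat_neq_iff add_left_cancel add_less_le_mono not_less)

lemma FC_finite: "FC l k T \<Longrightarrow> finite T"
  unfolding FC_def by (meson finite_SigmaI finite_lessThan finite_subset)

lemma FC_sums:
  assumes "FC l k T" "l \<ge> 1" "k \<ge> 1"
  shows "(\<lambda>(p, q). p + q) ` T = {..<l + k - 1}"
proof (rule card_subset_eq)
  show "finite {..<l + k - 1}" by simp
  show "(\<lambda>(p, q). p + q) ` T \<subseteq> {..<l + k - 1}"
    using assms unfolding FC_def by auto
  have "card ((\<lambda>(p, q). p + q) ` T) = card T"
    using assms chain_inj card_image unfolding FC_def by blast
  then show "card ((\<lambda>(p, q). p + q) ` T) = card {..<l + k - 1}"
    using assms unfolding FC_def by (simp; linarith)
qed

lemma FC_00: assumes "FC l k T" "l \<ge> 1" "k \<ge> 1" shows "(0, 0) \<in> T"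
proof -
  have "0 \<in> (\<lambda>(p, q). p + q) ` T" using FC_sums[OF assms] assms by simp
  then show ?thesis by auto
qed

lemma FC_base1: assumes "k \<ge> 1" shows "FC 1 k T \<longleftrightarrow> T = {0} \<times> {..<k}"
proof
  assume h: "FC 1 k T"
  then have s: "T \<subseteq> {0} \<times> {..<k}" unfolding FC_def by auto
  moreover have "card T = card ({0::nat} \<times> {..<k})" using h unfolding FC_def by (simp add: card_cartesian_product)
  ultimately show "T = {0} \<times> {..<k}" by (simp add: card_subset_eq)
next
  assume "T = {0} \<times> {..<k}"
  then show "FC 1 k T" unfolding FC_def chainT_def by (auto simp: card_cartesian_product)
qed

lemma FC_base2: assumes "l \<ge> 1" shows "FC l 1 T \<longleftrightarrow> T = {..<l} \<times> {0}"
proof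
  assume h: "FC l 1 T"
  then have s: "T \<subseteq> {..<l} \<times> {0}" unfolding FC_def by auto
  moreover have "card T = card ({..<l} \<times> {0::nat})" using h unfolding FC_def by (simp add: card_cartesian_product)
  ultimately show "T = {..<l} \<times> {0}" by (simp add: card_subset_eq)
next
  assume "T = {..<l} \<times> {0}"
  then show "FC l 1 T" unfolding FC_def chainT_def by (auto simp: card_cartesian_product)
qed

lemma FC_incL:
  assumes "FC l k T'" "k \<ge> 1"
  shows "FC (Suc l) k (insert (0, 0) (incL T'))"
proof -
  have fin: "finite T'" using FC_finite assms by blast
  have nin: "(0, 0) \<notin> incL T'" by (simp add: incL_mem)
  have inj: "inj_on (\<lambda>(p, q). (Suc p, q)) T'" by (auto simp: inj_on_def)
  have "card (incL T') = card T'" unfolding incL_def using card_image[OF inj] by simp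
  then have c: "card (insert (0, 0) (incL T')) = Suc (card T')"
    using nin fin by (simp add: incL_def)
  show ?thesis using assms c unfolding FC_def chainT_def
    by (auto simp: incL_mem)
qed

lemma FC_incR:
  assumes "FC l k T'" "l \<ge> 1"
  shows "FC l (Suc k) (insert (0, 0) (incR T'))"
proof -
  have fin: "finite T'" using FC_finite assms by blast
  have nin: "(0, 0) \<notin> incR T'" by (simp add: incR_mem)
  have inj: "inj_on (\<lambda>(p, q). (p, Suc q)) T'" by (auto simp: inj_on_def)
  have "card (incR T') = card T'" unfolding incR_def using card_image[OF inj] by simp
  then have c: "card (insert (0, 0) (incR T')) = Suc (card T')"
    using nin fin by (simp add: incR_def)
  show ?thesis using assms c unfolding FC_def chainT_def
    by (auto simp: incR_mem) (metis One_nat_def Suc_leI diff_less_mono)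
qed

definition decL :: "(nat \<times> nat) set \<Rightarrow> (nat \<times> nat) set" where
  "decL T = (\<lambda>(p, q). (p - 1, q)) ` (T - {(0, 0)})"
definition decR :: "(nat \<times> nat) set \<Rightarrow> (nat \<times> nat) set" where
  "decR T = (\<lambda>(p, q). (p, q - 1)) ` (T - {(0, 0)})"

lemma decL_mem:
  assumes "\<And>a b. (a, b) \<in> T \<Longrightarrow> (a, b) \<noteq> (0, 0) \<Longrightarrow> a \<ge> 1"
  shows "(x, y) \<in> decL T \<longleftrightarrow> (Suc x, y) \<in> T"
proof
  assume "(x, y) \<in> decL T"
  then obtain z where z: "z \<in> T - {(0, 0)}" "(x, y) = (case z of (p, q) \<Rightarrow> (p - 1, q))"
    unfolding decL_def by blast
  then obtain a b where ab: "(a, b) \<in> T" "(a, b) \<noteq> (0, 0)" "(a - 1, b) = (x, y)"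
    by (cases z) auto
  then have "a \<ge> 1" using assms by blast
  then have "(a, b) = (Suc x, y)" using ab by auto
  then show "(Suc x, y) \<in> T" using ab by simp
next
  assume "(Suc x, y) \<in> T"
  then show "(x, y) \<in> decL T" unfolding decL_def
    by (intro image_eqI[where x="(Suc x, y)"]) auto
qed

lemma decR_mem:
  assumes "\<And>a b. (a, b) \<in> T \<Longrightarrow> (a, b) \<noteq> (0, 0) \<Longrightarrow> b \<ge> 1"
  shows "(x, y) \<in> decR T \<longleftrightarrow> (x, Suc y) \<in> T"
proof
  assume "(x, y) \<in> decR T"
  then obtain z where z: "z \<in> T - {(0, 0)}" "(x, y) = (case z of (p, q) \<Rightarrow> (p, q - 1))"
    unfolding decR_def by blast
  then obtain a b where ab: "(a, b) \<in> T" "(a, b) \<noteq> (0, 0)" "(a, b - 1) = (x, y)"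
    by (cases z) auto
  then have "b \<ge> 1" using assms by blast
  then have "(a, b) = (x, Suc y)" using ab by auto
  then show "(x, Suc y) \<in> T" using ab by simp
next
  assume "(x, Suc y) \<in> T"
  then show "(x, y) \<in> decR T" unfolding decR_def
    by (intro image_eqI[where x="(x, Suc y)"]) auto
qed

lemma decL_card:
  assumes "\<And>a b. (a, b) \<in> T \<Longrightarrow> (a, b) \<noteq> (0, 0) \<Longrightarrow> a \<ge> 1" "finite T" "(0,0) \<in> T"
  shows "card (decL T) = card T - 1"
proof -
  have inj: "inj_on (\<lambda>(p, q). (p - 1, q)) (T - {(0, 0)})"
  proof (rule inj_onI)
    fix x y assume "x \<in> T - {(0, 0)}" "y \<in> T - {(0, 0)}"
      "(case x of (p, q) \<Rightarrow> (p - 1, q)) = (case y of (p, q) \<Rightarrow> (p - 1, q))"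
    then show "x = y" using assms(1)[of "fst x" "snd x"] assms(1)[of "fst y" "snd y"]
      by (cases x; cases y) auto
  qed
  have "card (decL T) = card (T - {(0, 0)})" unfolding decL_def by (rule card_image[OF inj])
  also have "\<dots> = card T - 1" using assms by (simp add: card_Diff_singleton)
  finally show ?thesis .
qed

lemma decR_card:
  assumes "\<And>a b. (a, b) \<in> T \<Longrightarrow> (a, b) \<noteq> (0, 0) \<Longrightarrow> b \<ge> 1" "finite T" "(0,0) \<in> T"
  shows "card (decR T) = card T - 1"
proof -
  have inj: "inj_on (\<lambda>(p, q). (p, q - 1)) (T - {(0, 0)})"
  proof (rule inj_onI)
    fix x y assume "x \<in> T - {(0, 0)}" "y \<in> T - {(0, 0)}"
      "(case x of (p, q) \<Rightarrow> (p, q - 1)) = (case y of (p, q) \<Rightarrow> (p, q - 1))"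
    then show "x = y" using assms(1)[of "fst x" "snd x"] assms(1)[of "fst y" "snd y"]
      by (cases x; cases y) auto
  qed
  have "card (decR T) = card (T - {(0, 0)})" unfolding decR_def by (rule card_image[OF inj])
  also have "\<dots> = card T - 1" using assms by (simp add: card_Diff_singleton)
  finally show ?thesis .
qed

lemma FC_dec:
  assumes F: "FC l k T" and l: "l \<ge> 1" and k: "k \<ge> 1" and lk: "l + k \<ge> 3"
  shows "(l \<ge> 2 \<and> (1, 0) \<in> T \<and> T = insert (0, 0) (incL (decL T)) \<and> FC (l - 1) k (decL T))
       \<or> (k \<ge> 2 \<and> (0, 1) \<in> T \<and> T = insert (0, 0) (incR (decR T)) \<and> FC l (k - 1) (decR T))"
proof -
  have z: "(0, 0) \<in> T" using FC_00 F l k by blast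
  have fin: "finite T" using FC_finite F by blast
  have "1 \<in> (\<lambda>(p, q). p + q) ` T" using FC_sums[OF F l k] lk by simp
  then obtain p q where pq: "(p, q) \<in> T" "p + q = 1" by auto
  have sub: "T \<subseteq> {..<l} \<times> {..<k}" and ch: "chainT T" and cT: "card T + 1 = l + k"
    using F unfolding FC_def by auto
  show ?thesis
  proof (cases "p = 1")
    case True
    then have q: "q = 0" using pq by simp
    have t10: "(1, 0) \<in> T" using pq True q by simp
    have row0: "\<And>y. (0, y) \<in> T \<Longrightarrow> y = 0"
      using ch t10 unfolding chainT_def by (metis less_one neq0_conv)
    have l2: "l \<ge> 2" using sub t10 by auto
    have pos: "\<And>x y. (x, y) \<in> T \<Longrightarrow> (x, y) \<noteq> (0, 0) \<Longrightarrow> x \<ge> 1"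
      using row0 by (metis less_one not_less)
    have dm: "\<And>x y. (x, y) \<in> decL T \<longleftrightarrow> (Suc x, y) \<in> T"
      by (rule decL_mem, rule pos)
    have cD: "card (decL T) = card T - 1" using decL_card[OF pos fin z] .
    have eq: "T = insert (0, 0) (incL (decL T))"
    proof (rule set_eqI)
      fix x :: "nat \<times> nat"
      obtain a b where x: "x = (a, b)" by (cases x)
      show "x \<in> T \<longleftrightarrow> x \<in> insert (0, 0) (incL (decL T))"
      proof (cases a)
        case 0
        then show ?thesis using x row0 z by (auto simp: incL_mem)
      next
        case (Suc a')
        then show ?thesis using x dm by (auto simp: incL_mem)
      qed
    qed
    have "FC (l - 1) k (decL T)"
      unfolding FC_def
    proof (intro conjI)
      show "decL T \<subseteq> {..<l - 1} \<times> {..<k}"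
      proof
        fix x assume "x \<in> decL T"
        then have "(Suc (fst x), snd x) \<in> T" using dm by (cases x) simp
        then show "x \<in> {..<l - 1} \<times> {..<k}" using sub by (cases x) auto
      qed
      show "chainT (decL T)" unfolding chainT_def
      proof (intro allI impI)
        fix p q t u assume a: "(p, q) \<in> decL T" "(t, u) \<in> decL T" "p < t"
        have "(Suc p, q) \<in> T" "(Suc t, u) \<in> T" using a(1,2) dm by auto
        then show "\<not> u < q" using ch a(3) unfolding chainT_def by simp
      qed
      show "card (decL T) + 1 = l - 1 + k" using cD cT l2 by simp
    qed
    then show ?thesis using l2 t10 eq by blast
  next
    case False
    then have pq': "p = 0" "q = 1" using pq by auto
    have t01: "(0, 1) \<in> T" using pq pq' by simp
    have col0: "\<And>x. (x, 0) \<in> T \<Longrightarrow> x = 0"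
      using ch t01 unfolding chainT_def by (metis less_one neq0_conv)
    have k2: "k \<ge> 2" using sub t01 by auto
    have pos: "\<And>x y. (x, y) \<in> T \<Longrightarrow> (x, y) \<noteq> (0, 0) \<Longrightarrow> y \<ge> 1"
      using col0 by (metis less_one not_less)
    have dm: "\<And>x y. (x, y) \<in> decR T \<longleftrightarrow> (x, Suc y) \<in> T"
      by (rule decR_mem, rule pos)
    have cD: "card (decR T) = card T - 1" using decR_card[OF pos fin z] .
    have eq: "T = insert (0, 0) (incR (decR T))"
    proof (rule set_eqI)
      fix x :: "nat \<times> nat"
      obtain a b where x: "x = (a, b)" by (cases x)
      show "x \<in> T \<longleftrightarrow> x \<in> insert (0, 0) (incR (decR T))"
      proof (cases b)
        case 0
        then show ?thesis using x col0 z by (auto simp: incR_mem)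
      next
        case (Suc b')
        then show ?thesis using x dm by (auto simp: incR_mem)
      qed
    qed
    have "FC l (k - 1) (decR T)"
      unfolding FC_def
    proof (intro conjI)
      show "decR T \<subseteq> {..<l} \<times> {..<k - 1}"
      proof
        fix x assume "x \<in> decR T"
        then have "(fst x, Suc (snd x)) \<in> T" using dm by (cases x) simp
        then show "x \<in> {..<l} \<times> {..<k - 1}" using sub by (cases x) auto
      qed
      show "chainT (decR T)" unfolding chainT_def
      proof (intro allI impI)
        fix p q t u assume a: "(p, q) \<in> decR T" "(t, u) \<in> decR T" "p < t"
        have "(p, Suc q) \<in> T" "(t, Suc u) \<in> T" using a(1,2) dm by auto
        then have "\<not> Suc u < Suc q" using ch a(3) unfolding chainT_def by blast
        then show "\<not> u < q" by simp
      qed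
      show "card (decR T) + 1 = l + (k - 1)" using cD cT k2 by simp
    qed
    then show ?thesis using k2 t01 eq by blast
  qed
qed

definition rp1 :: "nat \<Rightarrow> (nat \<times> nat) set \<Rightarrow> (nat \<times> nat \<Rightarrow> nat) \<Rightarrow> nat \<Rightarrow> nat" where
  "rp1 k T \<phi> p = (\<Sum>q<k. if (p, q) \<in> T then \<phi> (p, q) + 1 else 0)"
definition cl :: "nat \<Rightarrow> (nat \<times> nat) set \<Rightarrow> (nat \<times> nat \<Rightarrow> nat) \<Rightarrow> nat \<Rightarrow> nat" where
  "cl l T \<phi> q = (\<Sum>p<l. if (p, q) \<in> T then \<phi> (p, q) else 0)"

definition SOL :: "nat \<Rightarrow> nat \<Rightarrow> (nat \<Rightarrow> nat) \<Rightarrow> (nat \<Rightarrow> nat) \<Rightarrow> (nat \<times> nat) set \<Rightarrow> (nat \<times> nat \<Rightarrow> nat) \<Rightarrow> bool" where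
  "SOL l k \<alpha> \<beta> T \<phi> \<longleftrightarrow> FC l k T \<and> (\<forall>x. x \<notin> T \<longrightarrow> \<phi> x = 0) \<and>
     (\<forall>p<l. rp1 k T \<phi> p = \<alpha> p + 1) \<and> (\<forall>q<k. cl l T \<phi> q = \<beta> q)"

lemma memL: "(a, b) \<in> insert (0, 0) (incL T') \<longleftrightarrow> (a = 0 \<and> b = 0) \<or> (a > 0 \<and> (a - 1, b) \<in> T')"
  by (auto simp: incL_mem)
lemma memR: "(a, b) \<in> insert (0, 0) (incR T') \<longleftrightarrow> (a = 0 \<and> b = 0) \<or> (b > 0 \<and> (a, b - 1) \<in> T')"
  by (auto simp: incR_mem)

lemma rp1_L0: "0 < k \<Longrightarrow> rp1 k (insert (0, 0) (incL T')) \<phi> 0 = \<phi> (0, 0) + 1"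
proof -
  assume k: "0 < k"
  have "rp1 k (insert (0, 0) (incL T')) \<phi> 0 = (\<Sum>q<k. if q = 0 then \<phi> (0, 0) + 1 else 0)"
    unfolding rp1_def by (rule sum.cong) (auto simp: incL_mem)
  also have "\<dots> = \<phi> (0, 0) + 1" using k by (simp add: sum.delta)
  finally show ?thesis .
qed

lemma rp1_LS: "rp1 k (insert (0, 0) (incL T')) \<phi> (Suc p) = rp1 k T' (\<lambda>(p, q). \<phi> (Suc p, q)) p"
  unfolding rp1_def by (rule sum.cong) (auto simp: incL_mem)

lemma cl_L: "cl (Suc l) (insert (0, 0) (incL T')) \<phi> q
   = (if q = 0 then \<phi> (0, 0) else 0) + cl l T' (\<lambda>(p, q). \<phi> (Suc p, q)) q"
  unfolding cl_def sum.lessThan_Suc_shift by (auto simp: incL_mem intro!: sum.cong)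

lemma cl_R0: "0 < l \<Longrightarrow> cl l (insert (0, 0) (incR T')) \<phi> 0 = \<phi> (0, 0)"
proof -
  assume l: "0 < l"
  have "cl l (insert (0, 0) (incR T')) \<phi> 0 = (\<Sum>p<l. if p = 0 then \<phi> (0, 0) else 0)"
    unfolding cl_def by (rule sum.cong) (auto simp: incR_mem)
  also have "\<dots> = \<phi> (0, 0)" using l by (simp add: sum.delta)
  finally show ?thesis .
qed

lemma cl_RS: "cl l (insert (0, 0) (incR T')) \<phi> (Suc q) = cl l T' (\<lambda>(p, q). \<phi> (p, Suc q)) q"
  unfolding cl_def by (rule sum.cong) (auto simp: incR_mem)

lemma rp1_R: "rp1 (Suc k) (insert (0, 0) (incR T')) \<phi> p
   = (if p = 0 then \<phi> (0, 0) + 1 else 0) + rp1 k T' (\<lambda>(p, q). \<phi> (p, Suc q)) p"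
  unfolding rp1_def sum.lessThan_Suc_shift by (auto simp: incR_mem intro!: sum.cong)

lemma FC_rows:
  "FC l k T \<Longrightarrow> l \<ge> 1 \<Longrightarrow> k \<ge> 1 \<Longrightarrow> p < l \<Longrightarrow> \<exists>q. (p, q) \<in> T"
proof (induction "l + k" arbitrary: l k T p rule: less_induct)
  case less
  show ?case
  proof (cases "l = 1")
    case True
    then show ?thesis using less FC_base1[of k T] by (intro exI[of _ 0]) auto
  next
    case l: False
    show ?thesis
    proof (cases "k = 1")
      case True
      then show ?thesis using less FC_base2[of l T] by (intro exI[of _ 0]) auto
    next
      case False
      then have "l + k \<ge> 3" using l less by linarith
      from FC_dec[OF less(2-4) this] show ?thesis
      proof (elim disjE conjE)
        assume a: "l \<ge> 2" "T = insert (0, 0) (incL (decL T))" "FC (l - 1) k (decL T)"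
        show ?thesis
        proof (cases p)
          case 0 then show ?thesis using a by auto
        next
          case (Suc p')
          have "\<exists>q. (p', q) \<in> decL T"
            by (rule less(1)[of "l - 1" k "decL T" p']) (use a less Suc in auto)
          then obtain q where "(p', q) \<in> decL T" by blast
          then have "(p, q) \<in> T" using a(2) Suc by (metis incL_mem insertCI diff_Suc_1 zero_less_Suc)
          then show ?thesis by blast
        qed
      next
        assume a: "k \<ge> 2" "T = insert (0, 0) (incR (decR T))" "FC l (k - 1) (decR T)"
        have "\<exists>q. (p, q) \<in> decR T"
          by (rule less(1)[of l "k - 1" "decR T" p]) (use a less in auto)
        then obtain q where "(p, q) \<in> decR T" by blast
        then have "(p, Suc q) \<in> T" using a(2) by (metis incR_mem insertCI diff_Suc_1 zero_less_Suc)
        then show ?thesis by blast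
      qed
    qed
  qed
qed

lemma sum_shift_nat: "(\<Sum>q<Suc k. f q) = f 0 + (\<Sum>q<k. f (Suc q))"
  by (rule sum.lessThan_Suc_shift)

lemma core_ex:
  "l \<ge> 1 \<Longrightarrow> k \<ge> 1 \<Longrightarrow> (\<Sum>p<l. \<alpha> p) + 1 = (\<Sum>q<k. \<beta> q) + k
   \<Longrightarrow> \<exists>T \<phi>. SOL l k \<alpha> \<beta> T \<phi>"
proof (induction "l + k" arbitrary: l k \<alpha> \<beta> rule: less_induct)
  case less
  show ?case
  proof (cases "l = 1")
    case l1: True
    define T where "T = {0::nat} \<times> {..<k}"
    define \<phi> where "\<phi> = (\<lambda>(p::nat, q). if p = 0 \<and> q < k then \<beta> q else 0)"
    have "SOL l k \<alpha> \<beta> T \<phi>"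
      unfolding SOL_def
    proof (intro conjI allI impI)
      show "FC l k T" using FC_base1 less l1 T_def by simp
      show "\<phi> x = 0" if "x \<notin> T" for x using that unfolding T_def \<phi>_def by (cases x) auto
      show "rp1 k T \<phi> p = \<alpha> p + 1" if "p < l" for p
      proof -
        have p: "p = 0" using that l1 by simp
        have "rp1 k T \<phi> p = (\<Sum>q<k. \<beta> q + 1)"
          unfolding rp1_def T_def \<phi>_def p by (rule sum.cong) auto
        also have "\<dots> = (\<Sum>q<k. \<beta> q) + (\<Sum>q<k. 1)" by (rule sum.distrib)
        also have "\<dots> = \<alpha> p + 1" using less(4) l1 p by simp
        finally show ?thesis .
      qed
      show "cl l T \<phi> q = \<beta> q" if "q < k" for q
        using that unfolding cl_def T_def \<phi>_def l1 by simp
    qed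
    then show ?thesis by blast
  next
    case l: False
    show ?thesis
    proof (cases "k = 1")
      case k1: True
      define T where "T = {..<l} \<times> {0::nat}"
      define \<phi> where "\<phi> = (\<lambda>(p, q::nat). if q = 0 \<and> p < l then \<alpha> p else 0)"
      have "SOL l k \<alpha> \<beta> T \<phi>"
        unfolding SOL_def
      proof (intro conjI allI impI)
        show "FC l k T" using FC_base2 less k1 T_def by simp
        show "\<phi> x = 0" if "x \<notin> T" for x using that unfolding T_def \<phi>_def by (cases x) auto
        show "rp1 k T \<phi> p = \<alpha> p + 1" if "p < l" for p
          using that unfolding rp1_def T_def \<phi>_def k1 by simp
        show "cl l T \<phi> q = \<beta> q" if "q < k" for q
        proof -
          have q: "q = 0" using that k1 by simp
          have "cl l T \<phi> q = (\<Sum>p<l. \<alpha> p)"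
            unfolding cl_def T_def \<phi>_def q by (rule sum.cong) auto
          also have "\<dots> = \<beta> q" using less(4) k1 q by simp
          finally show ?thesis .
        qed
      qed
      then show ?thesis by blast
    next
      case k: False
      obtain l' where l': "l = Suc l'" "l' \<ge> 1" using l less(2) by (metis One_nat_def Suc_le_D le_antisym not_less_eq_eq)
      obtain k' where k': "k = Suc k'" "k' \<ge> 1" using k less(3) by (metis One_nat_def Suc_le_D le_antisym not_less_eq_eq)
      have sa: "(\<Sum>p<l. \<alpha> p) = \<alpha> 0 + (\<Sum>p<l'. \<alpha> (Suc p))" using l' sum_shift_nat by simp
      have sb: "(\<Sum>q<k. \<beta> q) = \<beta> 0 + (\<Sum>q<k'. \<beta> (Suc q))" using k' sum_shift_nat by simp
      show ?thesis
      proof (cases "\<alpha> 0 \<le> \<beta> 0")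
        case True
        define \<alpha>' where "\<alpha>' = (\<lambda>p. \<alpha> (Suc p))"
        define \<beta>' where "\<beta>' = \<beta>(0 := \<beta> 0 - \<alpha> 0)"
        have sb': "(\<Sum>q<k. \<beta>' q) = (\<beta> 0 - \<alpha> 0) + (\<Sum>q<k'. \<beta> (Suc q))"
          using k' sum_shift_nat[of \<beta>' k'] unfolding \<beta>'_def by simp
        have "(\<Sum>p<l'. \<alpha>' p) + 1 = (\<Sum>q<k. \<beta>' q) + k"
          using less(4) sa sb sb' True unfolding \<alpha>'_def by simp
        then have "\<exists>T' \<phi>'. SOL l' k \<alpha>' \<beta>' T' \<phi>'"
          by (intro less(1)) (use l' less(3) in auto)
        then obtain T' \<phi>' where S: "SOL l' k \<alpha>' \<beta>' T' \<phi>'" by blast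
        define T where "T = insert (0, 0) (incL T')"
        define \<phi> where "\<phi> = (\<lambda>(p, q). if p = 0 then (if q = 0 then \<alpha> 0 else 0) else \<phi>' (p - 1, q))"
        have phs: "(\<lambda>(p, q). \<phi> (Suc p, q)) = \<phi>'" unfolding \<phi>_def by auto
        have "SOL l k \<alpha> \<beta> T \<phi>"
          unfolding SOL_def
        proof (intro conjI allI impI)
          show "FC l k T" using FC_incL[of l' k T'] S less(3) l' unfolding SOL_def T_def by simp
          show "\<phi> x = 0" if "x \<notin> T" for x
            using that S unfolding T_def \<phi>_def SOL_def by (cases x) (auto simp: incL_mem)
          show "rp1 k T \<phi> p = \<alpha> p + 1" if "p < l" for p
          proof (cases p)
            case 0
            then show ?thesis unfolding T_def using rp1_L0 less(3) by (simp add: \<phi>_def)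
          next
            case (Suc p')
            have "rp1 k T \<phi> p = rp1 k T' \<phi>' p'" unfolding T_def Suc rp1_LS phs ..
            then show ?thesis using S that l' Suc unfolding SOL_def \<alpha>'_def by simp
          qed
          show "cl l T \<phi> q = \<beta> q" if "q < k" for q
            unfolding T_def l'(1) cl_L phs using S that True unfolding SOL_def \<beta>'_def
            by (auto simp: \<phi>_def)
        qed
        then show ?thesis by blast
      next
        case False
        define \<alpha>' where "\<alpha>' = \<alpha>(0 := \<alpha> 0 - \<beta> 0 - 1)"
        define \<beta>' where "\<beta>' = (\<lambda>q. \<beta> (Suc q))"
        have sa': "(\<Sum>p<l. \<alpha>' p) = (\<alpha> 0 - \<beta> 0 - 1) + (\<Sum>p<l'. \<alpha> (Suc p))"
          using l' sum_shift_nat[of \<alpha>' l'] unfolding \<alpha>'_def by simp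
        have "(\<Sum>p<l. \<alpha>' p) + 1 = (\<Sum>q<k'. \<beta>' q) + k'"
          using less(4) sa sb sa' False k' unfolding \<beta>'_def by simp
        then have "\<exists>T' \<phi>'. SOL l k' \<alpha>' \<beta>' T' \<phi>'"
          by (intro less(1)) (use k' less(2) in auto)
        then obtain T' \<phi>' where S: "SOL l k' \<alpha>' \<beta>' T' \<phi>'" by blast
        define T where "T = insert (0, 0) (incR T')"
        define \<phi> where "\<phi> = (\<lambda>(p, q). if q = 0 then (if p = 0 then \<beta> 0 else 0) else \<phi>' (p, q - 1))"
        have phs: "(\<lambda>(p, q). \<phi> (p, Suc q)) = \<phi>'" unfolding \<phi>_def by auto
        have "SOL l k \<alpha> \<beta> T \<phi>"
          unfolding SOL_def
        proof (intro conjI allI impI)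
          show "FC l k T" using FC_incR[of l k' T'] S less(2) k' unfolding SOL_def T_def by simp
          show "\<phi> x = 0" if "x \<notin> T" for x
            using that S unfolding T_def \<phi>_def SOL_def by (cases x) (auto simp: incR_mem)
          show "rp1 k T \<phi> p = \<alpha> p + 1" if "p < l" for p
            unfolding T_def k'(1) rp1_R phs using S that False unfolding SOL_def \<alpha>'_def
            by (auto simp: \<phi>_def)
          show "cl l T \<phi> q = \<beta> q" if "q < k" for q
          proof (cases q)
            case 0
            then show ?thesis unfolding T_def using cl_R0 less(2) by (simp add: \<phi>_def)
          next
            case (Suc q')
            have "cl l T \<phi> q = cl l T' \<phi>' q'" unfolding T_def Suc cl_RS phs ..
            then show ?thesis using S that k' Suc unfolding SOL_def \<beta>'_def by simp
          qed
        qed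
        then show ?thesis by blast
      qed
    qed
  qed
qed

lemma rp1_ge: "(p, q) \<in> T \<Longrightarrow> q < k \<Longrightarrow> \<phi> (p, q) + 1 \<le> rp1 k T \<phi> p"
  unfolding rp1_def
  by (rule order_trans[OF _ member_le_sum[of q]]) auto

lemma cl_ge: "(p, q) \<in> T \<Longrightarrow> p < l \<Longrightarrow> \<phi> (p, q) \<le> cl l T \<phi> q"
  unfolding cl_def
  by (rule order_trans[OF _ member_le_sum[of p]]) auto

lemma SOL_rowpeel:
  assumes S: "SOL (Suc l') k \<alpha> \<beta> T \<phi>" and T: "T = insert (0, 0) (incL T')"
    and F: "FC l' k T'" and k: "k \<ge> 1"
  shows "\<phi> (0, 0) = \<alpha> 0 \<and> \<alpha> 0 \<le> \<beta> 0 \<and>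
    SOL l' k (\<lambda>p. \<alpha> (Suc p)) (\<beta>(0 := \<beta> 0 - \<alpha> 0)) T' (\<lambda>(p, q). \<phi> (Suc p, q))"
proof -
  have r0: "rp1 k T \<phi> 0 = \<alpha> 0 + 1" using S unfolding SOL_def by simp
  then have p00: "\<phi> (0, 0) = \<alpha> 0" using rp1_L0[of k T' \<phi>] k T by simp
  have c0: "cl (Suc l') T \<phi> 0 = \<beta> 0" using S k unfolding SOL_def by simp
  then have c0': "\<alpha> 0 + cl l' T' (\<lambda>(p, q). \<phi> (Suc p, q)) 0 = \<beta> 0"
    using cl_L[of l' T' \<phi> 0] T p00 by simp
  have "SOL l' k (\<lambda>p. \<alpha> (Suc p)) (\<beta>(0 := \<beta> 0 - \<alpha> 0)) T' (\<lambda>(p, q). \<phi> (Suc p, q))"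
    unfolding SOL_def
  proof (intro conjI allI impI)
    show "FC l' k T'" by (rule F)
    show "(case x of (p, q) \<Rightarrow> \<phi> (Suc p, q)) = 0" if "x \<notin> T'" for x
      using that S T unfolding SOL_def by (cases x) (auto simp: incL_mem)
    show "rp1 k T' (\<lambda>(p, q). \<phi> (Suc p, q)) p = \<alpha> (Suc p) + 1" if "p < l'" for p
      using S that rp1_LS[of k T' \<phi> p] T unfolding SOL_def by simp
    show "cl l' T' (\<lambda>(p, q). \<phi> (Suc p, q)) q = (\<beta>(0 := \<beta> 0 - \<alpha> 0)) q" if "q < k" for q
      using S that cl_L[of l' T' \<phi> q] T c0' unfolding SOL_def by (cases "q = 0") auto
  qed
  then show ?thesis using p00 c0' by auto
qed

lemma SOL_colpeel:
  assumes S: "SOL l (Suc k') \<alpha> \<beta> T \<phi>" and T: "T = insert (0, 0) (incR T')"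
    and F: "FC l k' T'" and l: "l \<ge> 1" and k': "k' \<ge> 1"
  shows "\<phi> (0, 0) = \<beta> 0 \<and> \<beta> 0 < \<alpha> 0 \<and>
    SOL l k' (\<alpha>(0 := \<alpha> 0 - \<beta> 0 - 1)) (\<lambda>q. \<beta> (Suc q)) T' (\<lambda>(p, q). \<phi> (p, Suc q))"
proof -
  have c0: "cl l T \<phi> 0 = \<beta> 0" using S unfolding SOL_def by simp
  then have p00: "\<phi> (0, 0) = \<beta> 0" using cl_R0[of l T' \<phi>] l T by simp
  have r0: "rp1 (Suc k') T \<phi> 0 = \<alpha> 0 + 1" using S l unfolding SOL_def by simp
  then have r0': "\<beta> 0 + 1 + rp1 k' T' (\<lambda>(p, q). \<phi> (p, Suc q)) 0 = \<alpha> 0 + 1"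
    using rp1_R[of k' T' \<phi> 0] T p00 by simp
  have "(0, 0) \<in> T'" using FC_00[OF F l k'] .
  then have "(\<lambda>(p, q). \<phi> (p, Suc q)) (0, 0) + 1 \<le> rp1 k' T' (\<lambda>(p, q). \<phi> (p, Suc q)) 0"
    using k' by (intro rp1_ge) auto
  then have "1 \<le> rp1 k' T' (\<lambda>(p, q). \<phi> (p, Suc q)) 0" by simp
  then have lt: "\<beta> 0 < \<alpha> 0" using r0' by simp
  have "SOL l k' (\<alpha>(0 := \<alpha> 0 - \<beta> 0 - 1)) (\<lambda>q. \<beta> (Suc q)) T' (\<lambda>(p, q). \<phi> (p, Suc q))"
    unfolding SOL_def
  proof (intro conjI allI impI)
    show "FC l k' T'" by (rule F)
    show "(case x of (p, q) \<Rightarrow> \<phi> (p, Suc q)) = 0" if "x \<notin> T'" for x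
      using that S T unfolding SOL_def by (cases x) (auto simp: incR_mem)
    show "rp1 k' T' (\<lambda>(p, q). \<phi> (p, Suc q)) p = (\<alpha>(0 := \<alpha> 0 - \<beta> 0 - 1)) p + 1" if "p < l" for p
      using S that rp1_R[of k' T' \<phi> p] T r0' lt unfolding SOL_def by (cases "p = 0") auto
    show "cl l T' (\<lambda>(p, q). \<phi> (p, Suc q)) q = \<beta> (Suc q)" if "q < k'" for q
      using S that cl_RS[of l T' \<phi> q] T unfolding SOL_def by simp
  qed
  then show ?thesis using p00 lt by auto
qed

lemma core_uniq:
  "SOL l k \<alpha> \<beta> T \<phi> \<Longrightarrow> SOL l k \<alpha> \<beta> T2 \<phi>2 \<Longrightarrow> l \<ge> 1 \<Longrightarrow> k \<ge> 1 \<Longrightarrow> T = T2 \<and> \<phi> = \<phi>2"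
proof (induction "l + k" arbitrary: l k \<alpha> \<beta> T \<phi> T2 \<phi>2 rule: less_induct)
  case less
  have F1: "FC l k T" and F2: "FC l k T2" using less(2,3) unfolding SOL_def by auto
  show ?case
  proof (cases "l = 1")
    case l1: True
    then have TT: "T = {0} \<times> {..<k}" "T2 = {0} \<times> {..<k}" using FC_base1 F1 F2 less(5) by auto
    have "\<phi> x = \<phi>2 x" for x
    proof (cases "x \<in> T")
      case True
      then obtain q where x: "x = (0, q)" "q < k" using TT by auto
      have "cl l T \<phi> q = \<phi> (0, q)" "cl l T2 \<phi>2 q = \<phi>2 (0, q)"
        unfolding cl_def l1 using TT x by auto
      then show ?thesis using less(2,3) x unfolding SOL_def by auto
    next
      case False
      then show ?thesis using less(2,3) TT unfolding SOL_def by (cases x) auto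
    qed
    then show ?thesis using TT by auto
  next
    case l: False
    show ?thesis
    proof (cases "k = 1")
      case k1: True
      then have TT: "T = {..<l} \<times> {0}" "T2 = {..<l} \<times> {0}" using FC_base2 F1 F2 less(4) by auto
      have "\<phi> x = \<phi>2 x" for x
      proof (cases "x \<in> T")
        case True
        then obtain p where x: "x = (p, 0)" "p < l" using TT by auto
        have "rp1 k T \<phi> p = \<phi> (p, 0) + 1" "rp1 k T2 \<phi>2 p = \<phi>2 (p, 0) + 1"
          unfolding rp1_def k1 using TT x by auto
        then show ?thesis using less(2,3) x unfolding SOL_def by auto
      next
        case False
        then show ?thesis using less(2,3) TT unfolding SOL_def by (cases x) auto
      qed
      then show ?thesis using TT by auto
    next
      case k: False
      obtain l' where l': "l = Suc l'" "l' \<ge> 1" using l less(4) by (metis One_nat_def Suc_le_D le_antisym not_less_eq_eq)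
      obtain k' where k': "k = Suc k'" "k' \<ge> 1" using k less(5) by (metis One_nat_def Suc_le_D le_antisym not_less_eq_eq)
      have lk: "l + k \<ge> 3" using l' k' by simp
      note D1 = FC_dec[OF F1 less(4,5) lk] and D2 = FC_dec[OF F2 less(4,5) lk]
      show ?thesis
      proof (cases "\<alpha> 0 \<le> \<beta> 0")
        case True
        have R1: "T = insert (0, 0) (incL (decL T)) \<and> FC l' k (decL T)"
        proof (rule ccontr)
          assume "\<not> ?thesis"
          then have "T = insert (0, 0) (incR (decR T)) \<and> FC l k' (decR T)" using D1 l' k' by auto
          then show False using SOL_colpeel[of l k' \<alpha> \<beta> T \<phi> "decR T"] less(2,4) k' True by auto
        qed
        have R2: "T2 = insert (0, 0) (incL (decL T2)) \<and> FC l' k (decL T2)"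
        proof (rule ccontr)
          assume "\<not> ?thesis"
          then have "T2 = insert (0, 0) (incR (decR T2)) \<and> FC l k' (decR T2)" using D2 l' k' by auto
          then show False using SOL_colpeel[of l k' \<alpha> \<beta> T2 \<phi>2 "decR T2"] less(3,4) k' True by auto
        qed
        have S1: "SOL (Suc l') k \<alpha> \<beta> T \<phi>" and S2: "SOL (Suc l') k \<alpha> \<beta> T2 \<phi>2" using less(2,3) l' by auto
        note P1 = SOL_rowpeel[OF S1 conjunct1[OF R1] conjunct2[OF R1] less(5)]
          and P2 = SOL_rowpeel[OF S2 conjunct1[OF R2] conjunct2[OF R2] less(5)]
        have E: "decL T = decL T2 \<and> (\<lambda>(p, q). \<phi> (Suc p, q)) = (\<lambda>(p, q). \<phi>2 (Suc p, q))"
          by (rule less(1)[of l' k]) (use P1 P2 l' less(5) in auto)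
        have TE: "T = T2" using R1 R2 E by metis
        have "\<phi> x = \<phi>2 x" for x
        proof -
          obtain a b where x: "x = (a, b)" by (cases x)
          show ?thesis
          proof (cases a)
            case 0
            show ?thesis
            proof (cases "b = 0")
              case True then show ?thesis using P1 P2 x 0 by simp
            next
              case False
              obtain A1 A2 where A: "T = insert (0, 0) (incL A1)" "T2 = insert (0, 0) (incL A2)" using R1 R2 by blast
              have "x \<notin> T" "x \<notin> T2" unfolding A using x 0 False by (auto simp: incL_mem)
              then show ?thesis using less(2,3) unfolding SOL_def by (cases x) auto
            qed
          next
            case (Suc a')
            have "(\<lambda>(p, q). \<phi> (Suc p, q)) (a', b) = (\<lambda>(p, q). \<phi>2 (Suc p, q)) (a', b)" using E by simp
            then show ?thesis using x Suc by simp
          qed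
        qed
        then show ?thesis using TE by auto
      next
        case False
        have R1: "T = insert (0, 0) (incR (decR T)) \<and> FC l k' (decR T)"
        proof (rule ccontr)
          assume "\<not> ?thesis"
          then have "T = insert (0, 0) (incL (decL T)) \<and> FC l' k (decL T)" using D1 l' k' by auto
          then show False using SOL_rowpeel[of l' k \<alpha> \<beta> T \<phi> "decL T"] less(2,5) l' False by auto
        qed
        have R2: "T2 = insert (0, 0) (incR (decR T2)) \<and> FC l k' (decR T2)"
        proof (rule ccontr)
          assume "\<not> ?thesis"
          then have "T2 = insert (0, 0) (incL (decL T2)) \<and> FC l' k (decL T2)" using D2 l' k' by auto
          then show False using SOL_rowpeel[of l' k \<alpha> \<beta> T2 \<phi>2 "decL T2"] less(3,5) l' False by auto
        qed
        have S1: "SOL l (Suc k') \<alpha> \<beta> T \<phi>" and S2: "SOL l (Suc k') \<alpha> \<beta> T2 \<phi>2" using less(2,3) k' by auto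
        note P1 = SOL_colpeel[OF S1 conjunct1[OF R1] conjunct2[OF R1] less(4) k'(2)]
          and P2 = SOL_colpeel[OF S2 conjunct1[OF R2] conjunct2[OF R2] less(4) k'(2)]
        have E: "decR T = decR T2 \<and> (\<lambda>(p, q). \<phi> (p, Suc q)) = (\<lambda>(p, q). \<phi>2 (p, Suc q))"
          by (rule less(1)[of l k']) (use P1 P2 k' less(4) in auto)
        have TE: "T = T2" using R1 R2 E by metis
        have "\<phi> x = \<phi>2 x" for x
        proof -
          obtain a b where x: "x = (a, b)" by (cases x)
          show ?thesis
          proof (cases b)
            case 0
            show ?thesis
            proof (cases "a = 0")
              case True then show ?thesis using P1 P2 x 0 by simp
            next
              case False
              obtain A1 A2 where A: "T = insert (0, 0) (incR A1)" "T2 = insert (0, 0) (incR A2)" using R1 R2 by blast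
              have "x \<notin> T" "x \<notin> T2" unfolding A using x 0 False by (auto simp: incR_mem)
              then show ?thesis using less(2,3) unfolding SOL_def by (cases x) auto
            qed
          next
            case (Suc b')
            have "(\<lambda>(p, q). \<phi> (p, Suc q)) (a, b') = (\<lambda>(p, q). \<phi>2 (p, Suc q)) (a, b')" using E by simp
            then show ?thesis using x Suc by simp
          qed
        qed
        then show ?thesis using TE by auto
      qed
    qed
  qed
qed

lemma sum_box:
  fixes T :: "(nat \<times> nat) set" and f :: "nat \<times> nat \<Rightarrow> 'a::comm_monoid_add"
  assumes "T \<subseteq> {..<l} \<times> {..<k}"
  shows "(\<Sum>p<l. \<Sum>q<k. if (p, q) \<in> T then f (p, q) else 0) = (\<Sum>x\<in>T. f x)"
proof -
  have "(\<Sum>p<l. \<Sum>q<k. if (p, q) \<in> T then f (p, q) else 0)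
      = (\<Sum>x\<in>{..<l} \<times> {..<k}. if x \<in> T then f x else 0)"
    by (simp add: sum.cartesian_product)
  also have "\<dots> = sum f ({..<l} \<times> {..<k} \<inter> T)"
    by (rule sum.inter_restrict[symmetric]) (intro finite_cartesian_product finite_lessThan)
  also have "{..<l} \<times> {..<k} \<inter> T = T" using assms by blast
  finally show ?thesis .
qed

lemma sum_rp1: "T \<subseteq> {..<l} \<times> {..<k} \<Longrightarrow> (\<Sum>p<l. rp1 k T \<phi> p) = (\<Sum>x\<in>T. \<phi> x + 1)"
  unfolding rp1_def by (rule sum_box)

lemma sum_cl: "T \<subseteq> {..<l} \<times> {..<k} \<Longrightarrow> (\<Sum>q<k. cl l T \<phi> q) = (\<Sum>x\<in>T. \<phi> x)"
  unfolding cl_def by (subst sum.swap) (rule sum_box)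

lemma FC_sum_identity:
  assumes "FC l k T"
  shows "(\<Sum>p<l. rp1 k T \<phi> p) + 1 = (\<Sum>q<k. cl l T \<phi> q) + l + k"
proof -
  have sub: "T \<subseteq> {..<l} \<times> {..<k}" and c: "card T + 1 = l + k" using assms unfolding FC_def by auto
  have "(\<Sum>p<l. rp1 k T \<phi> p) = (\<Sum>x\<in>T. \<phi> x) + card T"
    using sum_rp1[OF sub] by (simp add: sum_Suc)
  then show ?thesis using sum_cl[OF sub, of \<phi>] c by simp
qed

lemma FC_rp1_pos: "FC l k T \<Longrightarrow> l \<ge> 1 \<Longrightarrow> k \<ge> 1 \<Longrightarrow> p < l \<Longrightarrow> rp1 k T \<phi> p \<ge> 1"
proof -
  assume a: "FC l k T" "l \<ge> 1" "k \<ge> 1" "p < l"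
  then obtain q where q: "(p, q) \<in> T" using FC_rows by blast
  then have "q < k" using a unfolding FC_def by auto
  then have "\<phi> (p, q) + 1 \<le> rp1 k T \<phi> p" using rp1_ge q by blast
  then show ?thesis by simp
qed

definition BE :: "(nat \<times> nat) set \<Rightarrow> ((nat + nat) \<times> (nat + nat)) set" where
  "BE T = {(Inl p, Inr q) | p q. (p, q) \<in> T}"

lemma rtrancl_map_gen:
  assumes "(x, y) \<in> R\<^sup>*" "\<And>a b. (a, b) \<in> R \<Longrightarrow> (f a, f b) \<in> S\<^sup>*"
  shows "(f x, f y) \<in> S\<^sup>*"
  using assms(1)
proof (induction rule: rtrancl_induct)
  case base then show ?case by simp
next
  case (step y z)
  then show ?case using assms(2) by (meson rtrancl_trans)
qed

lemma sym_conn: "(x, y) \<in> (E \<union> E\<inverse>)\<^sup>* \<Longrightarrow> (y, x) \<in> (E \<union> E\<inverse>)\<^sup>*"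
proof -
  assume "(x, y) \<in> (E \<union> E\<inverse>)\<^sup>*"
  then have "(y, x) \<in> ((E \<union> E\<inverse>)\<^sup>*)\<inverse>" by simp
  then have "(y, x) \<in> ((E \<union> E\<inverse>)\<inverse>)\<^sup>*" by (simp add: rtrancl_converse)
  moreover have "(E \<union> E\<inverse>)\<inverse> = E \<union> E\<inverse>" by auto
  ultimately show ?thesis by simp
qed

lemma FC_conn:
  "FC l k T \<Longrightarrow> l \<ge> 1 \<Longrightarrow> k \<ge> 1 \<Longrightarrow> x \<in> Inl ` {..<l} \<union> Inr ` {..<k}
   \<Longrightarrow> (Inl 0, x) \<in> (BE T \<union> (BE T)\<inverse>)\<^sup>*"
proof (induction "l + k" arbitrary: l k T x rule: less_induct)
  case less
  show ?case
  proof (cases "l = 1")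
    case True
    then have T: "T = {0} \<times> {..<k}" using FC_base1 less by auto
    show ?thesis
    proof (cases x)
      case (Inl p) then show ?thesis using less True by auto
    next
      case (Inr q)
      then have "(Inl 0, x) \<in> BE T" using less T unfolding BE_def by auto
      then show ?thesis by blast
    qed
  next
    case l: False
    show ?thesis
    proof (cases "k = 1")
      case True
      then have T: "T = {..<l} \<times> {0}" using FC_base2 less by auto
      have e0: "(Inl 0, Inr 0) \<in> BE T" using less T unfolding BE_def by auto
      show ?thesis
      proof (cases x)
        case (Inl p)
        then have "(x, Inr 0) \<in> BE T" using less T unfolding BE_def by auto
        then have "(Inr 0, x) \<in> (BE T \<union> (BE T)\<inverse>)" by blast
        then show ?thesis using e0 by (meson UnI1 converse_rtrancl_into_rtrancl r_into_rtrancl)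
      next
        case (Inr q)
        then show ?thesis using e0 less True by auto
      qed
    next
      case k: False
      have lk: "l + k \<ge> 3" using l k less by linarith
      have e0: "(Inl 0, Inr 0) \<in> BE T" using FC_00[OF less(2-4)] unfolding BE_def by auto
      from FC_dec[OF less(2-4) lk] show ?thesis
      proof (elim disjE conjE)
        assume a0: "l \<ge> 2" "(1, 0) \<in> T" "T = insert (0, 0) (incL (decL T))" "FC (l - 1) k (decL T)"
        obtain D where a: "l \<ge> 2" "T = insert (0, 0) (incL D)" "FC (l - 1) k D" using a0 by blast
        define f where "f = (\<lambda>z::nat + nat. case z of Inl p \<Rightarrow> Inl (Suc p) | Inr q \<Rightarrow> Inr q)"
        have fe: "(f a, f b) \<in> (BE T \<union> (BE T)\<inverse>)\<^sup>*" if "(a, b) \<in> BE (D) \<union> (BE (D))\<inverse>" for a b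
        proof -
          have "(f a, f b) \<in> BE T \<union> (BE T)\<inverse>"
            using that unfolding BE_def f_def a(2)
            by (auto simp: incL_mem)
          then show ?thesis by blast
        qed
        have IH: "(Inl 0, y) \<in> (BE (D) \<union> (BE (D))\<inverse>)\<^sup>*"
          if "y \<in> Inl ` {..<l - 1} \<union> Inr ` {..<k}" for y
          by (rule less(1)[of "l - 1" k]) (use that a less in auto)
        have i0: "(Inl 0, Inr 0) \<in> (BE (D) \<union> (BE (D))\<inverse>)\<^sup>*" using IH less by auto
        have "(f (Inl 0), f (Inr 0)) \<in> (BE T \<union> (BE T)\<inverse>)\<^sup>*"
          by (rule rtrancl_map_gen[where f=f, OF i0 fe])
        then have c1: "(Inl 1, Inr 0) \<in> (BE T \<union> (BE T)\<inverse>)\<^sup>*" unfolding f_def by simp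
        have c2: "(Inl 0, Inl 1) \<in> (BE T \<union> (BE T)\<inverse>)\<^sup>*"
          using e0 sym_conn[OF c1] by (meson UnI1 converse_rtrancl_into_rtrancl)
        show ?thesis
        proof (cases "x = Inl 0")
          case True then show ?thesis by simp
        next
          case False
          have "\<exists>y\<in>Inl ` {..<l - 1} \<union> Inr ` {..<k}. x = f y"
          proof (cases x)
            case (Inl p)
            then have "p \<noteq> 0" "p < l" using False less(5) by auto
            then show ?thesis unfolding f_def Inl by (intro bexI[of _ "Inl (p - 1)"]) auto
          next
            case (Inr q)
            then show ?thesis using less(5) unfolding f_def by (intro bexI[of _ "Inr q"]) auto
          qed
          then obtain y where y: "y \<in> Inl ` {..<l - 1} \<union> Inr ` {..<k}" "x = f y" by blast
          have "(f (Inl 0), f y) \<in> (BE T \<union> (BE T)\<inverse>)\<^sup>*"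
            by (rule rtrancl_map_gen[where f=f, OF IH[OF y(1)] fe])
          then have "(Inl 1, x) \<in> (BE T \<union> (BE T)\<inverse>)\<^sup>*" using y(2) unfolding f_def by simp
          then show ?thesis using c2 by (meson rtrancl_trans)
        qed
      next
        assume a0: "k \<ge> 2" "(0, 1) \<in> T" "T = insert (0, 0) (incR (decR T))" "FC l (k - 1) (decR T)"
        obtain D where a: "k \<ge> 2" "T = insert (0, 0) (incR D)" "FC l (k - 1) D" using a0 by blast
        define f where "f = (\<lambda>z::nat + nat. case z of Inl p \<Rightarrow> Inl p | Inr q \<Rightarrow> Inr (Suc q))"
        have fe: "(f a, f b) \<in> (BE T \<union> (BE T)\<inverse>)\<^sup>*" if "(a, b) \<in> BE (D) \<union> (BE (D))\<inverse>" for a b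
        proof -
          have "(f a, f b) \<in> BE T \<union> (BE T)\<inverse>"
            using that unfolding BE_def f_def a(2)
            by (auto simp: incR_mem)
          then show ?thesis by blast
        qed
        have IH: "(Inl 0, y) \<in> (BE (D) \<union> (BE (D))\<inverse>)\<^sup>*"
          if "y \<in> Inl ` {..<l} \<union> Inr ` {..<k - 1}" for y
          by (rule less(1)[of l "k - 1"]) (use that a less in auto)
        show ?thesis
        proof (cases "x = Inr 0")
          case True then show ?thesis using e0 by blast
        next
          case False
          have "\<exists>y\<in>Inl ` {..<l} \<union> Inr ` {..<k - 1}. x = f y"
          proof (cases x)
            case (Inr q)
            then have "q \<noteq> 0" "q < k" using False less(5) by auto
            then show ?thesis unfolding f_def Inr by (intro bexI[of _ "Inr (q - 1)"]) auto
          next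
            case (Inl p)
            then show ?thesis using less(5) unfolding f_def by (intro bexI[of _ "Inl p"]) auto
          qed
          then obtain y where y: "y \<in> Inl ` {..<l} \<union> Inr ` {..<k - 1}" "x = f y" by blast
          have "(f (Inl 0), f y) \<in> (BE T \<union> (BE T)\<inverse>)\<^sup>*"
            by (rule rtrancl_map_gen[where f=f, OF IH[OF y(1)] fe])
          then show ?thesis using y(2) unfolding f_def by simp
        qed
      qed
    qed
  qed
qed

lemma nc_FC: assumes "l \<ge> 1" "k \<ge> 1" shows "nc_trees l k = {T. FC l k T}"
proof (rule set_eqI, rule iffI)
  fix T assume "T \<in> nc_trees l k"
  then show "T \<in> {T. FC l k T}" unfolding nc_trees_def FC_def chainT_def by auto
next
  fix T assume "T \<in> {T. FC l k T}"
  then have F: "FC l k T" by simp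
  have "bip_connected l k T"
    unfolding bip_connected_def Let_def BE_def[symmetric]
  proof (intro ballI)
    fix x y assume x: "x \<in> Inl ` {..<l} \<union> Inr ` {..<k}" and y: "y \<in> Inl ` {..<l} \<union> Inr ` {..<k}"
    show "(x, y) \<in> (BE T \<union> (BE T)\<inverse>)\<^sup>*"
      using sym_conn[OF FC_conn[OF F assms x]] FC_conn[OF F assms y] by (meson rtrancl_trans)
  qed
  then show "T \<in> nc_trees l k" using F unfolding nc_trees_def FC_def chainT_def by auto
qed



definition w :: "edge \<Rightarrow> nat \<Rightarrow> nat \<Rightarrow> int" where
  "w e x c = (if fst e = c then int x + 1 else 0) - (if snd e = c then int x else 0)"

definition FL :: "nat \<Rightarrow> 'j set \<Rightarrow> ('j \<Rightarrow> edge) \<Rightarrow> (nat \<Rightarrow> int) \<Rightarrow> ('j \<Rightarrow> nat) set" where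
  "FL n J E t = {x. (\<forall>j. j \<notin> J \<longrightarrow> x j = 0) \<and> (\<forall>c\<in>{1..n+1}. (\<Sum>j\<in>J. w (E j) (x j) c) = t c)}"

definition validE :: "nat \<Rightarrow> edge \<Rightarrow> bool" where
  "validE n e \<longleftrightarrow> 1 \<le> fst e \<and> fst e < snd e \<and> snd e \<le> n + 1"

lemma w_weighted:
  assumes "validE n e"
  shows "(\<Sum>c\<in>{1..n+1}. int c * w e x c) = int (fst e) - int x * (int (snd e) - int (fst e))"
proof -
  have f: "fst e \<in> {1..n+1}" and s: "snd e \<in> {1..n+1}" using assms unfolding validE_def by auto
  have "(\<Sum>c\<in>{1..n+1}. int c * w e x c)
     = (\<Sum>c\<in>{1..n+1}. if c = fst e then int c * (int x + 1) else 0)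
       - (\<Sum>c\<in>{1..n+1}. if c = snd e then int c * int x else 0)"
    unfolding w_def sum_subtractf[symmetric] by (rule sum.cong) (auto simp: algebra_simps)
  also have "\<dots> = int (fst e) * (int x + 1) - int (snd e) * int x"
    using f s by (simp add: sum.delta')
  finally show ?thesis by (simp add: algebra_simps)
qed

lemma FL_bound:
  assumes J: "finite J" and V: "\<And>j. j \<in> J \<Longrightarrow> validE n (E j)" and x: "x \<in> FL n J E t"
  shows "int (\<Sum>j\<in>J. x j) \<le> (\<Sum>j\<in>J. int (fst (E j))) - (\<Sum>c\<in>{1..n+1}. int c * t c)"
proof -
  have eq: "\<And>c. c \<in> {1..n+1} \<Longrightarrow> (\<Sum>j\<in>J. w (E j) (x j) c) = t c" using x unfolding FL_def by auto
  have "(\<Sum>c\<in>{1..n+1}. int c * t c) = (\<Sum>c\<in>{1..n+1}. int c * (\<Sum>j\<in>J. w (E j) (x j) c))"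
    using eq by simp
  also have "\<dots> = (\<Sum>j\<in>J. \<Sum>c\<in>{1..n+1}. int c * w (E j) (x j) c)"
    by (simp add: sum_distrib_left sum.swap[of _ J])
  also have "\<dots> = (\<Sum>j\<in>J. int (fst (E j)) - int (x j) * (int (snd (E j)) - int (fst (E j))))"
    using V w_weighted by (intro sum.cong) auto
  also have "\<dots> \<le> (\<Sum>j\<in>J. int (fst (E j)) - int (x j))"
  proof (rule sum_mono)
    fix j assume "j \<in> J"
    then have "int (snd (E j)) - int (fst (E j)) \<ge> 1" using V unfolding validE_def by force
    then have "int (x j) * (int (snd (E j)) - int (fst (E j))) \<ge> int (x j)"
      by (metis mult.right_neutral mult_left_mono of_nat_0_le_iff)
    then show "int (fst (E j)) - int (x j) * (int (snd (E j)) - int (fst (E j))) \<le> int (fst (E j)) - int (x j)"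
      by simp
  qed
  also have "\<dots> = (\<Sum>j\<in>J. int (fst (E j))) - int (\<Sum>j\<in>J. x j)"
    by (simp add: sum_subtractf)
  finally show ?thesis by simp
qed

lemma FL_finite:
  assumes J: "finite J" and V: "\<And>j. j \<in> J \<Longrightarrow> validE n (E j)"
  shows "finite (FL n J E t)"
proof -
  define C where "C = nat ((\<Sum>j\<in>J. int (fst (E j))) - (\<Sum>c\<in>{1..n+1}. int c * t c))"
  have "FL n J E t \<subseteq> {x. \<forall>j. (j \<in> J \<longrightarrow> x j \<in> {..C}) \<and> (j \<notin> J \<longrightarrow> x j = 0)}"
  proof (intro subsetI CollectI allI conjI impI)
    fix x j assume x: "x \<in> FL n J E t"
    show "j \<notin> J \<Longrightarrow> x j = 0" using x unfolding FL_def by auto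
    assume j: "j \<in> J"
    have "x j \<le> (\<Sum>j\<in>J. x j)" using J j by (intro member_le_sum) auto
    then have "int (x j) \<le> (\<Sum>j\<in>J. int (fst (E j))) - (\<Sum>c\<in>{1..n+1}. int c * t c)"
      using FL_bound[OF J V x] by linarith
    then show "x j \<in> {..C}" unfolding C_def by (simp add: le_nat_iff)
  qed
  moreover have "finite {x. \<forall>j. (j \<in> J \<longrightarrow> x j \<in> {..C}) \<and> (j \<notin> J \<longrightarrow> x j = 0)}"
    by (rule finite_set_of_finite_funs[OF J]) simp
  ultimately show ?thesis by (rule finite_subset)
qed

lemma FL_reindex:
  assumes b: "bij_betw \<sigma> J' J" and e: "\<And>j. j \<in> J' \<Longrightarrow> E (\<sigma> j) = E' j"
  shows "card (FL n J E t) = card (FL n J' E' t)"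
proof -
  define M where "M = (\<lambda>x j. if j \<in> J' then x (\<sigma> j) else (0::nat))"
  define N where "N = (\<lambda>y j. if j \<in> J then y (inv_into J' \<sigma> j) else (0::nat))"
  have inv1: "\<And>j. j \<in> J \<Longrightarrow> inv_into J' \<sigma> j \<in> J' \<and> \<sigma> (inv_into J' \<sigma> j) = j"
    using b by (metis bij_betw_def bij_betw_inv_into_left bij_betw_inv_into_right inv_into_into)
  have inv2: "\<And>j. j \<in> J' \<Longrightarrow> inv_into J' \<sigma> (\<sigma> j) = j \<and> \<sigma> j \<in> J"
    using b by (meson bij_betw_apply bij_betw_inv_into_left)
  have "bij_betw M (FL n J E t) (FL n J' E' t)"
  proof (rule bij_betw_byWitness[where f'=N])
    show "\<forall>x\<in>FL n J E t. N (M x) = x"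
    proof
      fix x assume x: "x \<in> FL n J E t"
      show "N (M x) = x"
      proof
        fix j show "N (M x) j = x j"
          using x inv1[of j] unfolding N_def M_def FL_def by auto
      qed
    qed
    show "\<forall>y\<in>FL n J' E' t. M (N y) = y"
    proof
      fix y assume y: "y \<in> FL n J' E' t"
      show "M (N y) = y"
      proof
        fix j show "M (N y) j = y j"
          using y inv2[of j] unfolding N_def M_def FL_def by auto
      qed
    qed
    show "M ` FL n J E t \<subseteq> FL n J' E' t"
    proof
      fix z assume "z \<in> M ` FL n J E t"
      then obtain x where x: "x \<in> FL n J E t" and z: "z = M x" by blast
      have "(\<Sum>j\<in>J'. w (E' j) (z j) c) = (\<Sum>j\<in>J. w (E j) (x j) c)" for c
      proof -
        have "(\<Sum>j\<in>J'. w (E' j) (z j) c) = (\<Sum>j\<in>J'. w (E (\<sigma> j)) (x (\<sigma> j)) c)"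
          using e unfolding z M_def by (intro sum.cong) auto
        also have "\<dots> = (\<Sum>j\<in>J. w (E j) (x j) c)"
          by (rule sum.reindex_bij_betw[OF b])
        finally show ?thesis .
      qed
      then show "z \<in> FL n J' E' t" using x unfolding FL_def z M_def by auto
    qed
    show "N ` FL n J' E' t \<subseteq> FL n J E t"
    proof
      fix z assume "z \<in> N ` FL n J' E' t"
      then obtain y where y: "y \<in> FL n J' E' t" and z: "z = N y" by blast
      have "(\<Sum>j\<in>J. w (E j) (z j) c) = (\<Sum>j\<in>J'. w (E' j) (y j) c)" for c
      proof -
        have "(\<Sum>j\<in>J'. w (E' j) (y j) c) = (\<Sum>j\<in>J'. w (E (\<sigma> j)) (z (\<sigma> j)) c)"
          using e inv2 unfolding z N_def by (intro sum.cong) auto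
        also have "\<dots> = (\<Sum>j\<in>J. w (E j) (z j) c)"
          by (rule sum.reindex_bij_betw[OF b])
        finally show ?thesis by simp
      qed
      then show "z \<in> FL n J E t" using y unfolding FL_def z N_def by auto
    qed
  qed
  then show ?thesis by (rule bij_betw_same_card)
qed

lemma mset_reindex:
  assumes "finite J'"
  shows "finite J \<Longrightarrow> image_mset E (mset_set J) = image_mset E' (mset_set J')
    \<Longrightarrow> \<exists>\<sigma>. bij_betw \<sigma> J' J \<and> (\<forall>j\<in>J'. E (\<sigma> j) = E' j)"
  using assms
proof (induction J' arbitrary: J rule: finite_induct)
  case empty
  then have "J = {}" by (metis image_mset_is_empty_iff mset_set.infinite mset_set_empty_iff)
  then show ?case by (auto simp: bij_betw_def)
next
  case (insert a J0)
  have "E' a \<in># image_mset E (mset_set J)" using insert by simp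
  then obtain b where b0: "b \<in># mset_set J" "E b = E' a" by auto
  then have b: "b \<in> J" "E b = E' a" using insert(4) by auto
  have "image_mset E (mset_set J) = add_mset (E b) (image_mset E (mset_set (J - {b})))"
    using b insert(4) by (simp add: mset_set.remove)
  moreover have "image_mset E' (mset_set (insert a J0)) = add_mset (E' a) (image_mset E' (mset_set J0))"
    using insert by simp
  ultimately have "image_mset E (mset_set (J - {b})) = image_mset E' (mset_set J0)"
    using insert(5) b by simp
  then obtain \<sigma>0 where s0: "bij_betw \<sigma>0 J0 (J - {b})" "\<forall>j\<in>J0. E (\<sigma>0 j) = E' j"
    using insert(3)[of "J - {b}"] insert(4) by auto
  define \<sigma> where "\<sigma> = \<sigma>0(a := b)"
  have "bij_betw \<sigma> J0 (J - {b})" using s0(1) insert(2) unfolding \<sigma>_def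
    by (metis bij_betw_cong fun_upd_other)
  then have "bij_betw \<sigma> (J0 \<union> {a}) ((J - {b}) \<union> {\<sigma> a})"
    using notIn_Un_bij_betw3[of a J0 \<sigma> "J - {b}"] insert(2) unfolding \<sigma>_def by simp
  moreover have "(J - {b}) \<union> {\<sigma> a} = J" "J0 \<union> {a} = insert a J0" using b unfolding \<sigma>_def by auto
  ultimately have "bij_betw \<sigma> (insert a J0) J" by simp
  moreover have "\<forall>j\<in>insert a J0. E (\<sigma> j) = E' j"
    using s0(2) b insert(2) unfolding \<sigma>_def by auto
  ultimately show ?case by blast
qed

lemma card_FL_mset:
  assumes "finite J" "finite J'" "image_mset E (mset_set J) = image_mset E' (mset_set J')"
  shows "card (FL n J E t) = card (FL n J' E' t)"
  using mset_reindex[OF assms(2,1,3)] FL_reindex by blast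

definition Kt :: "nat \<Rightarrow> (nat \<Rightarrow> int) \<Rightarrow> graph \<Rightarrow> nat" where
  "Kt n t H = card (FL n {..<size H} (\<lambda>j. sorted_list_of_multiset H ! j) t)"

lemma image_nth_mset: "image_mset (\<lambda>j. es ! j) (mset_set {..<length es}) = mset es"
proof -
  have "mset es = mset (map (\<lambda>j. es ! j) [0..<length es])" by (simp add: map_nth)
  also have "\<dots> = image_mset (\<lambda>j. es ! j) (mset_set {..<length es})"
    by (simp add: atLeast0LessThan)
  finally show ?thesis by simp
qed

lemma Kt_mset:
  assumes "finite J" "image_mset E (mset_set J) = H"
  shows "Kt n t H = card (FL n J E t)"
proof -
  have "length (sorted_list_of_multiset H) = size H"
    by (metis mset_sorted_list_of_multiset size_mset)
  then have "image_mset (\<lambda>j. sorted_list_of_multiset H ! j) (mset_set {..<size H}) = H"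
    using image_nth_mset[of "sorted_list_of_multiset H"] by simp
  then show ?thesis unfolding Kt_def using assms
    by (intro card_FL_mset) auto
qed

definition tg :: "nat \<Rightarrow> (nat \<Rightarrow> nat) \<Rightarrow> nat \<Rightarrow> int" where
  "tg n m = (\<lambda>k. if k \<in> {1..n} then int (m k) else 0)"

lemma sum_w_netflow:
  fixes H :: graph
  defines "es \<equiv> sorted_list_of_multiset H"
  shows "(\<Sum>j<size H. w (es ! j) (f j) c) = netflow H f c + int (outd H c)"
proof -
  have len: "length es = size H" unfolding es_def by (metis mset_sorted_list_of_multiset size_mset)
  have A: "{j. j < length es \<and> fst (es ! j) = c} = {j\<in>{..<size H}. fst (es ! j) = c}" using len by auto
  have B: "{j. j < length es \<and> snd (es ! j) = c} = {j\<in>{..<size H}. snd (es ! j) = c}" using len by auto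
  have co: "card {j\<in>{..<size H}. fst (es ! j) = c} = outd H c"
  proof -
    have "outd H c = size (filter_mset (\<lambda>e. fst e = c) (mset es))"
      unfolding outd_def es_def by simp
    also have "\<dots> = length (filter (\<lambda>e. fst e = c) es)" by (metis mset_filter size_mset)
    also have "\<dots> = card {j. j < length es \<and> fst (es ! j) = c}" by (rule length_filter_conv_card)
    finally show ?thesis using A by simp
  qed
  have "(\<Sum>j<size H. w (es ! j) (f j) c)
      = (\<Sum>j<size H. if fst (es ! j) = c then int (f j) + 1 else 0)
        - (\<Sum>j<size H. if snd (es ! j) = c then int (f j) else 0)"
    unfolding w_def by (simp add: sum_subtractf)
  also have "\<dots> = (\<Sum>j\<in>{j\<in>{..<size H}. fst (es ! j) = c}. int (f j) + 1)
        - (\<Sum>j\<in>{j\<in>{..<size H}. snd (es ! j) = c}. int (f j))"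
  proof -
    have s1: "(\<Sum>j\<in>{j\<in>{..<size H}. fst (es ! j) = c}. int (f j) + 1)
       = (\<Sum>j<size H. if fst (es ! j) = c then int (f j) + 1 else 0)"
      by (rule sum.inter_filter) simp
    have s2: "(\<Sum>j\<in>{j\<in>{..<size H}. snd (es ! j) = c}. int (f j))
       = (\<Sum>j<size H. if snd (es ! j) = c then int (f j) else 0)"
      by (rule sum.inter_filter) simp
    show ?thesis by (simp only: s1 s2)
  qed
  also have "\<dots> = netflow H f c + int (outd H c)"
    unfolding netflow_def Let_def es_def[symmetric] A B using co by (simp add: sum.distrib)
  finally show ?thesis .
qed

lemma K_Kt:
  assumes V: "\<forall>e\<in>#H. validE n e"
  shows "K n H (\<lambda>k. if k \<in> {1..n} then int (m k) - int (outd H k) else 0) = Kt n (tg n m) H"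
proof -
  have o: "outd H (n + 1) = 0"
  proof -
    have "filter_mset (\<lambda>e. fst e = n + 1) H = {#}" using V unfolding validE_def multiset_eq_iff
      by (auto simp: count_eq_zero_iff)
    then show ?thesis unfolding outd_def by simp
  qed
  show ?thesis unfolding K_def Kt_def FL_def
  proof (rule arg_cong[where f=card], rule Collect_cong, rule conj_cong)
    fix f :: "nat \<Rightarrow> nat"
    show "(\<forall>j\<ge>size H. f j = 0) = (\<forall>j. j \<notin> {..<size H} \<longrightarrow> f j = 0)" by auto
    show "(\<forall>k\<in>{1..n + 1}. netflow H f k = (if k \<in> {1..n} then int (m k) - int (outd H k) else 0)) =
      (\<forall>c\<in>{1..n + 1}. (\<Sum>j\<in>{..<size H}. w (sorted_list_of_multiset H ! j) (f j) c) = tg n m c)"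
      unfolding sum_w_netflow tg_def using o
      by (intro ball_cong) (auto simp: le_Suc_eq)
  qed
qed



definition ETc :: "edge list \<Rightarrow> edge list \<Rightarrow> nat \<Rightarrow> nat \<times> nat \<Rightarrow> edge" where
  "ETc Ls Rs i t = (if fst t < length Ls then fst (Ls ! fst t) else i, snd (Rs ! snd t))"

lemma sum_l_split:
  fixes f :: "nat \<Rightarrow> 'a::comm_monoid_add"
  shows
  "(\<Sum>p<l0 + (if pos then 1 else 0). f p) = (\<Sum>p<l0. f p) + (if pos then f l0 else 0)"
proof (cases pos)
  case True then show ?thesis using sum.lessThan_Suc[of f l0] by simp
qed simp

lemma rp1_int: "int (rp1 k T \<phi> p) = (\<Sum>q<k. if (p, q) \<in> T then int (\<phi> (p, q)) + 1 else 0)"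
  unfolding rp1_def of_nat_sum by (intro sum.cong) auto

lemma cl_int: "int (cl l T \<phi> q) = (\<Sum>p<l. if (p, q) \<in> T then int (\<phi> (p, q)) else 0)"
  unfolding cl_def of_nat_sum by (intro sum.cong) auto

lemma local_T_sum:
  fixes T :: "(nat \<times> nat) set"
  assumes sub: "T \<subseteq> {..<l} \<times> {..<k}"
  shows "(\<Sum>t\<in>T. w (src (fst t), snd (Rs ! snd t)) (\<phi> t) c)
     = (\<Sum>p<l. if src p = c then int (rp1 k T \<phi> p) else 0)
       - (\<Sum>q<k. if snd (Rs ! q) = c then int (cl l T \<phi> q) else 0)"
proof -
  define g where "g = (\<lambda>t. w (src (fst t), snd (Rs ! snd t)) (\<phi> t) c)"
  have "(\<Sum>t\<in>T. w (src (fst t), snd (Rs ! snd t)) (\<phi> t) c) = (\<Sum>t\<in>T. g t)" unfolding g_def ..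
  also have "\<dots> = (\<Sum>p<l. \<Sum>q<k. if (p, q) \<in> T then g (p, q) else 0)"
    by (rule sum_box[OF sub, symmetric])
  also have "\<dots> = (\<Sum>p<l. \<Sum>q<k. if (p, q) \<in> T then w (src p, snd (Rs ! q)) (\<phi> (p, q)) c else 0)"
    unfolding g_def by (simp cong: if_cong)
  also have "\<dots> = (\<Sum>p<l. \<Sum>q<k. if (p, q) \<in> T then (if src p = c then int (\<phi> (p, q)) + 1 else 0) else 0)
      - (\<Sum>p<l. \<Sum>q<k. if (p, q) \<in> T then (if snd (Rs ! q) = c then int (\<phi> (p, q)) else 0) else 0)"
    unfolding w_def sum_subtractf[symmetric] by (intro sum.cong) auto
  also have "(\<Sum>p<l. \<Sum>q<k. if (p, q) \<in> T then (if src p = c then int (\<phi> (p, q)) + 1 else 0) else 0)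
      = (\<Sum>p<l. if src p = c then int (rp1 k T \<phi> p) else 0)"
    unfolding rp1_int by (intro sum.cong) (auto cong: if_cong)
  also have "(\<Sum>p<l. \<Sum>q<k. if (p, q) \<in> T then (if snd (Rs ! q) = c then int (\<phi> (p, q)) else 0) else 0)
      = (\<Sum>q<k. if snd (Rs ! q) = c then int (cl l T \<phi> q) else 0)"
    unfolding cl_int by (subst sum.swap) (intro sum.cong, auto cong: if_cong)
  finally show ?thesis .
qed

lemma local_identity:
  fixes Ls Rs :: "edge list" and pos :: bool
  defines "l0 \<equiv> length Ls" and "k \<equiv> length Rs" and "l \<equiv> length Ls + (if pos then 1 else 0)"
  assumes F: "FC l k T" and l1: "l \<ge> 1" and k1: "k \<ge> 1"
    and Lsnd: "\<And>p. p < l0 \<Longrightarrow> snd (Ls ! p) = i \<and> fst (Ls ! p) \<noteq> i"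
    and Rfst: "\<And>q. q < k \<Longrightarrow> fst (Rs ! q) = i \<and> snd (Rs ! q) \<noteq> i"
  shows "(\<Sum>p<l0. w (Ls ! p) (rp1 k T \<phi> p - 1) c) + (\<Sum>q<k. w (Rs ! q) (cl l T \<phi> q) c)
       = (\<Sum>t\<in>T. w (ETc Ls Rs i t) (\<phi> t) c) + (if c = i \<and> \<not> pos then 1 else 0)"
proof -
  define src where "src = (\<lambda>p. if p < l0 then fst (Ls ! p) else i)"
  have sub: "T \<subseteq> {..<l} \<times> {..<k}" using F unfolding FC_def by auto
  have et: "\<And>t. ETc Ls Rs i t = (src (fst t), snd (Rs ! snd t))" unfolding ETc_def src_def l0_def by simp
  have pos1: "\<And>p. p < l \<Longrightarrow> rp1 k T \<phi> p \<ge> 1" using FC_rp1_pos F l1 k1 by blast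
  have ll: "l = l0 + (if pos then 1 else 0)" unfolding l_def l0_def ..
  have Lpart: "\<And>p. p < l0 \<Longrightarrow> w (Ls ! p) (rp1 k T \<phi> p - 1) c
      = (if fst (Ls ! p) = c then int (rp1 k T \<phi> p) else 0) - (if i = c then int (rp1 k T \<phi> p) - 1 else 0)"
  proof -
    fix p assume p: "p < l0"
    then have "rp1 k T \<phi> p \<ge> 1" using pos1 ll by auto
    then show "w (Ls ! p) (rp1 k T \<phi> p - 1) c
      = (if fst (Ls ! p) = c then int (rp1 k T \<phi> p) else 0) - (if i = c then int (rp1 k T \<phi> p) - 1 else 0)"
      using Lsnd[OF p] unfolding w_def by (auto simp: of_nat_diff)
  qed
  have Rpart: "\<And>q. q < k \<Longrightarrow> w (Rs ! q) (cl l T \<phi> q) c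
      = (if i = c then int (cl l T \<phi> q) + 1 else 0) - (if snd (Rs ! q) = c then int (cl l T \<phi> q) else 0)"
    using Rfst unfolding w_def by auto
  define S1 where "S1 = (\<Sum>p<l0. if fst (Ls ! p) = c then int (rp1 k T \<phi> p) else 0)"
  define S2 where "S2 = (\<Sum>q<k. if snd (Rs ! q) = c then int (cl l T \<phi> q) else 0)"
  define P where "P = (\<Sum>p<l0. int (rp1 k T \<phi> p))"
  define C where "C = (\<Sum>q<k. int (cl l T \<phi> q))"
  define r where "r = int (rp1 k T \<phi> l0)"
  have LHS: "(\<Sum>p<l0. w (Ls ! p) (rp1 k T \<phi> p - 1) c) + (\<Sum>q<k. w (Rs ! q) (cl l T \<phi> q) c)
      = S1 - (if i = c then P - int l0 else 0) + (if i = c then C + int k else 0) - S2"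
  proof -
    have "(\<Sum>p<l0. w (Ls ! p) (rp1 k T \<phi> p - 1) c)
       = (\<Sum>p<l0. (if fst (Ls ! p) = c then int (rp1 k T \<phi> p) else 0) - (if i = c then int (rp1 k T \<phi> p) - 1 else 0))"
      using Lpart by (intro sum.cong) auto
    also have "\<dots> = S1 - (if i = c then P - int l0 else 0)"
      unfolding S1_def P_def sum_subtractf by (auto simp: sum_subtractf)
    finally have A: "(\<Sum>p<l0. w (Ls ! p) (rp1 k T \<phi> p - 1) c) = S1 - (if i = c then P - int l0 else 0)" .
    have "(\<Sum>q<k. w (Rs ! q) (cl l T \<phi> q) c)
       = (\<Sum>q<k. (if i = c then int (cl l T \<phi> q) + 1 else 0) - (if snd (Rs ! q) = c then int (cl l T \<phi> q) else 0))"
      using Rpart by (intro sum.cong) auto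
    also have "\<dots> = (if i = c then C + int k else 0) - S2"
      unfolding S2_def C_def sum_subtractf by (auto simp: sum.distrib)
    finally show ?thesis using A by simp
  qed
  have RHS: "(\<Sum>t\<in>T. w (ETc Ls Rs i t) (\<phi> t) c) = S1 + (if pos \<and> i = c then r else 0) - S2"
  proof -
    have "(\<Sum>t\<in>T. w (ETc Ls Rs i t) (\<phi> t) c) = (\<Sum>t\<in>T. w (src (fst t), snd (Rs ! snd t)) (\<phi> t) c)"
      unfolding et ..
    also have "\<dots> = (\<Sum>p<l. if src p = c then int (rp1 k T \<phi> p) else 0) - S2"
      unfolding S2_def by (rule local_T_sum[OF sub])
    also have "(\<Sum>p<l. if src p = c then int (rp1 k T \<phi> p) else 0)
        = (\<Sum>p<l0. if src p = c then int (rp1 k T \<phi> p) else 0) + (if pos then (if src l0 = c then r else 0) else 0)"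
      unfolding ll r_def by (rule sum_l_split)
    also have "(\<Sum>p<l0. if src p = c then int (rp1 k T \<phi> p) else 0) = S1"
      unfolding S1_def src_def by (intro sum.cong) auto
    finally show ?thesis unfolding src_def by auto
  qed
  have ID: "P + (if pos then r else 0) + 1 = C + int l0 + (if pos then 1 else 0) + int k"
  proof -
    have "(\<Sum>p<l. rp1 k T \<phi> p) + 1 = (\<Sum>q<k. cl l T \<phi> q) + l + k" by (rule FC_sum_identity[OF F])
    then have "int ((\<Sum>p<l. rp1 k T \<phi> p) + 1) = int ((\<Sum>q<k. cl l T \<phi> q) + l + k)" by (simp only:)
    then have "int (\<Sum>p<l. rp1 k T \<phi> p) + 1 = C + int l + int k" unfolding C_def of_nat_add of_nat_sum by simp
    moreover have "int (\<Sum>p<l. rp1 k T \<phi> p) = P + (if pos then r else 0)"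
      unfolding ll P_def r_def of_nat_sum by (rule sum_l_split)
    ultimately show ?thesis unfolding ll by auto
  qed
  show ?thesis unfolding LHS RHS using ID by auto
qed



lemma sum_plus:
  assumes "finite A" "finite B"
  shows "sum g (Inl ` A \<union> Inr ` B) = (\<Sum>a\<in>A. g (Inl a)) + (\<Sum>b\<in>B. g (Inr b))"
proof -
  have "sum g (Inl ` A \<union> Inr ` B) = sum g (Inl ` A) + sum g (Inr ` B)"
    using assms by (intro sum.union_disjoint) auto
  also have "sum g (Inl ` A) = (\<Sum>a\<in>A. g (Inl a))" by (simp add: sum.reindex)
  also have "sum g (Inr ` B) = (\<Sum>b\<in>B. g (Inr b))" by (simp add: sum.reindex)
  finally show ?thesis .
qed

lemma mset_set_plus:
  assumes "finite A" "finite B"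
  shows "mset_set (Inl ` A \<union> Inr ` B) = image_mset Inl (mset_set A) + image_mset Inr (mset_set B)"
proof -
  have "mset_set (Inl ` A \<union> Inr ` B) = mset_set (Inl ` A) + mset_set (Inr ` B)"
    using assms by (intro mset_set_Union) auto
  also have "mset_set (Inl ` A) = image_mset Inl (mset_set A)"
    by (rule image_mset_mset_set[symmetric]) simp
  also have "mset_set (Inr ` B) = image_mset Inr (mset_set B)"
    by (rule image_mset_mset_set[symmetric]) simp
  finally show ?thesis .
qed

lemma finite_JH: "finite (Inl ` {..<R} \<union> Inr ` (Inl ` {..<l0} \<union> Inr ` {..<k}) :: (nat + nat + nat) set)"
  by simp

lemma sumJH:
  fixes g :: "nat + nat + nat \<Rightarrow> 'a::comm_monoid_add"
  shows "(\<Sum>z\<in>Inl ` {..<R} \<union> Inr ` (Inl ` {..<l0} \<union> Inr ` {..<k}). g z)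
   = (\<Sum>j<R. g (Inl j)) + (\<Sum>p<l0. g (Inr (Inl p))) + (\<Sum>q<k. g (Inr (Inr q)))"
  using sum_plus[of "{..<R}" "Inl ` {..<l0} \<union> Inr ` {..<k}" g]
    sum_plus[of "{..<l0}" "{..<k}" "\<lambda>b. g (Inr b)"] by (simp add: add.assoc)

lemma sumJT:
  fixes g :: "nat + (nat \<times> nat) + nat \<Rightarrow> 'a::comm_monoid_add"
  shows "finite T \<Longrightarrow> finite Z \<Longrightarrow> (\<Sum>z\<in>Inl ` {..<R} \<union> Inr ` (Inl ` T \<union> Inr ` Z). g z)
   = (\<Sum>j<R. g (Inl j)) + (\<Sum>t\<in>T. g (Inr (Inl t))) + (\<Sum>z\<in>Z. g (Inr (Inr z)))"
  using sum_plus[of "{..<R}" "Inl ` T \<union> Inr ` Z" g]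
    sum_plus[of "T" "Z" "\<lambda>b. g (Inr b)"] by (simp add: add.assoc)

lemma H_decomp:
  assumes V: "\<forall>e\<in>#H. validE n e"
  shows "H = filter_mset (\<lambda>e. snd e \<noteq> i \<and> fst e \<noteq> i) H + filter_mset (\<lambda>e. snd e = i) H + filter_mset (\<lambda>e. fst e = i) H"
    and "H - filter_mset (\<lambda>e. snd e = i) H - filter_mset (\<lambda>e. fst e = i) H = filter_mset (\<lambda>e. snd e \<noteq> i \<and> fst e \<noteq> i) H"
proof -
  have nb: "\<And>e. e \<in># H \<Longrightarrow> \<not> (snd e = i \<and> fst e = i)" using V unfolding validE_def by force
  show "H = filter_mset (\<lambda>e. snd e \<noteq> i \<and> fst e \<noteq> i) H + filter_mset (\<lambda>e. snd e = i) H + filter_mset (\<lambda>e. fst e = i) H"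
    unfolding multiset_eq_iff
  proof
    fix e show "count H e = count (filter_mset (\<lambda>e. snd e \<noteq> i \<and> fst e \<noteq> i) H + filter_mset (\<lambda>e. snd e = i) H + filter_mset (\<lambda>e. fst e = i) H) e"
      using nb[of e] by (cases "e \<in># H") (auto simp: not_in_iff)
  qed
  show "H - filter_mset (\<lambda>e. snd e = i) H - filter_mset (\<lambda>e. fst e = i) H = filter_mset (\<lambda>e. snd e \<noteq> i \<and> fst e \<noteq> i) H"
    unfolding multiset_eq_iff
  proof
    fix e show "count (H - filter_mset (\<lambda>e. snd e = i) H - filter_mset (\<lambda>e. fst e = i) H) e = count (filter_mset (\<lambda>e. snd e \<noteq> i \<and> fst e \<noteq> i) H) e"
      using nb[of e] by (cases "e \<in># H") (auto simp: not_in_iff)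
  qed
qed

lemma Tsum_i:
  fixes Ls Rs :: "edge list" and pos :: bool
  defines "l0 \<equiv> length Ls" and "k \<equiv> length Rs" and "l \<equiv> length Ls + (if pos then 1 else 0)"
  assumes F: "FC l k T"
    and Lsnd: "\<And>p. p < l0 \<Longrightarrow> snd (Ls ! p) = i \<and> fst (Ls ! p) \<noteq> i"
    and Rfst: "\<And>q. q < k \<Longrightarrow> fst (Rs ! q) = i \<and> snd (Rs ! q) \<noteq> i"
  shows "(\<Sum>t\<in>T. w (ETc Ls Rs i t) (\<phi> t) i) = (if pos then int (rp1 k T \<phi> l0) else 0)"
proof -
  define src where "src = (\<lambda>p. if p < l0 then fst (Ls ! p) else i)"
  have sub: "T \<subseteq> {..<l} \<times> {..<k}" using F unfolding FC_def by auto
  have et: "\<And>t. ETc Ls Rs i t = (src (fst t), snd (Rs ! snd t))" unfolding ETc_def src_def l0_def by simp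
  have "(\<Sum>t\<in>T. w (ETc Ls Rs i t) (\<phi> t) i) = (\<Sum>t\<in>T. w (src (fst t), snd (Rs ! snd t)) (\<phi> t) i)"
    unfolding et ..
  also have "\<dots> = (\<Sum>p<l. if src p = i then int (rp1 k T \<phi> p) else 0)
       - (\<Sum>q<k. if snd (Rs ! q) = i then int (cl l T \<phi> q) else 0)"
    by (rule local_T_sum[OF sub])
  also have "(\<Sum>q<k. if snd (Rs ! q) = i then int (cl l T \<phi> q) else 0) = 0"
    using Rfst by (intro sum.neutral) auto
  also have "(\<Sum>p<l. if src p = i then int (rp1 k T \<phi> p) else 0)
      = (\<Sum>p<l0. if src p = i then int (rp1 k T \<phi> p) else 0) + (if pos then (if src l0 = i then int (rp1 k T \<phi> l0) else 0) else 0)"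
    unfolding l_def l0_def by (rule sum_l_split)
  also have "(\<Sum>p<l0. if src p = i then int (rp1 k T \<phi> p) else 0) = 0"
    using Lsnd unfolding src_def by (intro sum.neutral) auto
  finally show ?thesis unfolding src_def by simp
qed

lemma step_identity:
  fixes H :: graph and Ls Rs :: "edge list" and a m :: "nat \<Rightarrow> nat"
  assumes V: "\<forall>e\<in>#H. validE n e"
    and mL: "mset Ls = filter_mset (\<lambda>e. snd e = i) H"
    and mR: "mset Rs = filter_mset (\<lambda>e. fst e = i) H"
    and i: "1 \<le> i" "i \<le> n"
    and Lne: "Ls \<noteq> []" and Rne: "Rs \<noteq> []"
    and mi0: "a i = 0 \<Longrightarrow> m i = 1" and mi1: "m i \<ge> 1"
  shows "Kt n (tg n m) H = (\<Sum>T \<in> nc_trees (length Ls + (if a i > 0 then 1 else 0)) (length Rs).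
            Kt n (tg n m) (reduce_child n a Ls Rs H i T))"
proof -
  define pos where "pos = (a i > 0)"
  define l0 where "l0 = length Ls"
  define k where "k = length Rs"
  define l where "l = length Ls + (if pos then 1 else 0)"
  define t where "t = tg n m"
  define rs where "rs = sorted_list_of_multiset (filter_mset (\<lambda>e. snd e \<noteq> i \<and> fst e \<noteq> i) H)"
  define R where "R = length rs"
  define JH :: "(nat + nat + nat) set" where "JH = Inl ` {..<R} \<union> Inr ` (Inl ` {..<l0} \<union> Inr ` {..<k})"
  define EH :: "nat + nat + nat \<Rightarrow> edge" where
    "EH = (\<lambda>z. case z of Inl j \<Rightarrow> rs ! j | Inr (Inl p) \<Rightarrow> Ls ! p | Inr (Inr q) \<Rightarrow> Rs ! q)"
  define Z :: "nat set" where "Z = (if pos then {} else {0})"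
  define JT :: "(nat \<times> nat) set \<Rightarrow> (nat + (nat \<times> nat) + nat) set" where
    "JT = (\<lambda>T. Inl ` {..<R} \<union> Inr ` (Inl ` T \<union> Inr ` Z))"
  define ET :: "nat + (nat \<times> nat) + nat \<Rightarrow> edge" where
    "ET = (\<lambda>z. case z of Inl j \<Rightarrow> rs ! j | Inr (Inl s) \<Rightarrow> ETc Ls Rs i s | Inr (Inr _) \<Rightarrow> (i, n + 1))"
  define NC where "NC = nc_trees l k"
  have l1: "l \<ge> 1" and k1: "k \<ge> 1" using Lne Rne unfolding l_def k_def by (auto simp: Suc_le_eq)
  have NC: "NC = {T. FC l k T}" unfolding NC_def using nc_FC l1 k1 by simp
  have mrs: "mset rs = filter_mset (\<lambda>e. snd e \<noteq> i \<and> fst e \<noteq> i) H" unfolding rs_def by simp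
  have vrs: "\<And>j. j < R \<Longrightarrow> validE n (rs ! j) \<and> fst (rs ! j) \<noteq> i \<and> snd (rs ! j) \<noteq> i"
  proof -
    fix j assume "j < R"
    then have "rs ! j \<in># mset rs" unfolding R_def by simp
    then show "validE n (rs ! j) \<and> fst (rs ! j) \<noteq> i \<and> snd (rs ! j) \<noteq> i" using V unfolding mrs by auto
  qed
  have vL: "\<And>p. p < l0 \<Longrightarrow> validE n (Ls ! p) \<and> snd (Ls ! p) = i \<and> fst (Ls ! p) \<noteq> i"
  proof -
    fix p assume "p < l0"
    then have "Ls ! p \<in># mset Ls" unfolding l0_def by simp
    then have "Ls ! p \<in># H" "snd (Ls ! p) = i" unfolding mL by auto
    then show "validE n (Ls ! p) \<and> snd (Ls ! p) = i \<and> fst (Ls ! p) \<noteq> i" using V unfolding validE_def by force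
  qed
  have vR: "\<And>q. q < k \<Longrightarrow> validE n (Rs ! q) \<and> fst (Rs ! q) = i \<and> snd (Rs ! q) \<noteq> i"
  proof -
    fix q assume "q < k"
    then have "Rs ! q \<in># mset Rs" unfolding k_def by simp
    then have "Rs ! q \<in># H" "fst (Rs ! q) = i" unfolding mR by auto
    then show "validE n (Rs ! q) \<and> fst (Rs ! q) = i \<and> snd (Rs ! q) \<noteq> i" using V unfolding validE_def by force
  qed
  have finJH: "finite JH" unfolding JH_def by simp
  have MH: "image_mset EH (mset_set JH) = H"
  proof -
    have "mset_set JH = image_mset Inl (mset_set {..<R}) + image_mset Inr (image_mset Inl (mset_set {..<l0}) + image_mset Inr (mset_set {..<k}))"
      unfolding JH_def by (simp add: mset_set_plus)
    then have "image_mset EH (mset_set JH) = mset rs + mset Ls + mset Rs"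
      using image_nth_mset[of rs] image_nth_mset[of Ls] image_nth_mset[of Rs]
      unfolding EH_def R_def l0_def k_def by (simp add: multiset.map_comp comp_def add.assoc)
    then show ?thesis using H_decomp(1)[OF V, of i] mrs mL mR by simp
  qed
  have finT: "\<And>T. T \<in> NC \<Longrightarrow> finite T" using NC FC_finite by blast
  have finJT: "\<And>T. T \<in> NC \<Longrightarrow> finite (JT T)" unfolding JT_def Z_def using finT by simp
  have MT: "\<And>T. T \<in> NC \<Longrightarrow> image_mset ET (mset_set (JT T)) = reduce_child n a Ls Rs H i T"
  proof -
    fix T assume T: "T \<in> NC"
    have "mset_set (JT T) = image_mset Inl (mset_set {..<R}) + image_mset Inr (image_mset Inl (mset_set T) + image_mset Inr (mset_set Z))"
      unfolding JT_def using finT[OF T] by (simp add: mset_set_plus Z_def)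
    then have "image_mset ET (mset_set (JT T)) = mset rs + image_mset (ETc Ls Rs i) (mset_set T) + image_mset (\<lambda>_. (i, n + 1)) (mset_set Z)"
      using image_nth_mset[of rs] unfolding ET_def R_def by (simp add: multiset.map_comp comp_def add.assoc)
    moreover have "image_mset (\<lambda>_. (i, n + 1)) (mset_set Z) = (if a i = 0 then {#(i, n + 1)#} else {#})"
      unfolding Z_def pos_def by simp
    moreover have "(\<lambda>(p, q). if p < length Ls then (fst (Ls ! p), snd (Rs ! q)) else (i, snd (Rs ! q))) = ETc Ls Rs i"
      unfolding ETc_def by auto
    moreover have "H - mset Ls - mset Rs = mset rs" using H_decomp(2)[OF V, of i] mrs mL mR by simp
    ultimately show "image_mset ET (mset_set (JT T)) = reduce_child n a Ls Rs H i T"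
      unfolding reduce_child_def by simp
  qed
  have KH: "Kt n t H = card (FL n JH EH t)" by (rule Kt_mset[OF finJH MH])
  have KT: "\<And>T. T \<in> NC \<Longrightarrow> Kt n t (reduce_child n a Ls Rs H i T) = card (FL n (JT T) ET t)"
    by (rule Kt_mset[OF finJT MT])
  have finNC: "finite NC"
  proof (rule finite_subset)
    show "NC \<subseteq> Pow ({..<l} \<times> {..<k})" unfolding NC FC_def by auto
  qed simp
  have vET: "\<And>T z. T \<in> NC \<Longrightarrow> z \<in> JT T \<Longrightarrow> validE n (ET z)"
  proof -
    fix T z assume T: "T \<in> NC" and z: "z \<in> JT T"
    have sub: "T \<subseteq> {..<l} \<times> {..<k}" using T NC unfolding FC_def by auto
    show "validE n (ET z)"
    proof (cases z)
      case (Inl j) then show ?thesis using z vrs unfolding JT_def ET_def by auto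
    next
      case (Inr z')
      show ?thesis
      proof (cases z')
        case (Inl s)
        obtain p q where s: "s = (p, q)" by (cases s)
        have pq: "p < l" "q < k" using sub z Inr Inl s unfolding JT_def by auto
        have "validE n (Rs ! q)" "fst (Rs ! q) = i" using vR pq by auto
        moreover have "p < l0 \<Longrightarrow> validE n (Ls ! p) \<and> snd (Ls ! p) = i" using vL by auto
        ultimately show ?thesis unfolding ET_def Inr Inl s ETc_def l0_def[symmetric] validE_def
          using i by auto
      next
        case (Inr u)
        then show ?thesis unfolding ET_def using `z = Inr z'` i unfolding validE_def by auto
      qed
    qed
  qed
  have finFL: "\<And>T. T \<in> NC \<Longrightarrow> finite (FL n (JT T) ET t)"
    using FL_finite finJT vET by blast
  have sumK: "(\<Sum>T\<in>NC. Kt n t (reduce_child n a Ls Rs H i T)) = card (SIGMA T:NC. FL n (JT T) ET t)"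
    using KT finNC finFL by simp
  have sH: "\<And>x c. (\<Sum>z\<in>JH. w (EH z) (x z) c) = (\<Sum>j<R. w (rs ! j) (x (Inl j)) c)
      + (\<Sum>p<l0. w (Ls ! p) (x (Inr (Inl p))) c) + (\<Sum>q<k. w (Rs ! q) (x (Inr (Inr q))) c)"
    unfolding JH_def by (simp add: sumJH EH_def)
  have sT: "\<And>T (y :: nat + (nat \<times> nat) + nat \<Rightarrow> nat) c. T \<in> NC \<Longrightarrow> (\<Sum>z\<in>JT T. w (ET z) (y z) c) = (\<Sum>j<R. w (rs ! j) (y (Inl j)) c)
      + (\<Sum>s\<in>T. w (ETc Ls Rs i s) (y (Inr (Inl s))) c) + (if pos then 0 else w (i, n + 1) (y (Inr (Inr 0))) c)"
  proof -
    fix T and y :: "nat + (nat \<times> nat) + nat \<Rightarrow> nat" and c assume T: "T \<in> NC"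
    show "(\<Sum>z\<in>JT T. w (ET z) (y z) c) = (\<Sum>j<R. w (rs ! j) (y (Inl j)) c)
      + (\<Sum>s\<in>T. w (ETc Ls Rs i s) (y (Inr (Inl s))) c) + (if pos then 0 else w (i, n + 1) (y (Inr (Inr 0))) c)"
      unfolding JT_def using sumJT[where R=R and T=T and Z=Z and g="\<lambda>z. w (ET z) (y z) c"] finT[OF T]
      by (simp add: ET_def Z_def)
  qed
  have rest_i: "\<And>r. (\<Sum>j<R. w (rs ! j) (r j) i) = 0"
    using vrs unfolding w_def by (intro sum.neutral) auto
  have iin: "i \<in> {1..n+1}" using i by auto
  have ti: "t i = int (m i)" unfolding t_def tg_def using i by auto
  define \<Theta> :: "(nat \<times> nat) set \<Rightarrow> (nat + (nat \<times> nat) + nat \<Rightarrow> nat) \<Rightarrow> nat + nat + nat \<Rightarrow> nat" where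
    "\<Theta> = (\<lambda>T y z. case z of Inl j \<Rightarrow> y (Inl j)
       | Inr (Inl p) \<Rightarrow> (if p < l0 then rp1 k T (\<lambda>s. y (Inr (Inl s))) p - 1 else 0)
       | Inr (Inr q) \<Rightarrow> (if q < k then cl l T (\<lambda>s. y (Inr (Inl s))) q else 0))"
  have C0: "\<And>T (y :: nat + (nat \<times> nat) + nat \<Rightarrow> nat) c. T \<in> NC \<Longrightarrow> (\<Sum>z\<in>JH. w (EH z) (\<Theta> T y z) c)
      = (\<Sum>z\<in>JT T. w (ET z) (y z) c) + (if c = i \<and> \<not> pos then 1 else 0)
        - (if pos then 0 else w (i, n + 1) (y (Inr (Inr 0))) c)"
  proof -
    fix T and y :: "nat + (nat \<times> nat) + nat \<Rightarrow> nat" and c assume T: "T \<in> NC"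
    have F: "FC l k T" using T NC by auto
    have LI: "(\<Sum>p<l0. w (Ls ! p) (rp1 k T (\<lambda>s. y (Inr (Inl s))) p - 1) c) + (\<Sum>q<k. w (Rs ! q) (cl l T (\<lambda>s. y (Inr (Inl s))) q) c)
       = (\<Sum>s\<in>T. w (ETc Ls Rs i s) (y (Inr (Inl s))) c) + (if c = i \<and> \<not> pos then 1 else 0)"
      using local_identity[of Ls pos Rs T i "\<lambda>s. y (Inr (Inl s))" c] F l1 k1 vL vR
      unfolding l_def l0_def k_def by auto
    have "(\<Sum>p<l0. w (Ls ! p) (\<Theta> T y (Inr (Inl p))) c) = (\<Sum>p<l0. w (Ls ! p) (rp1 k T (\<lambda>s. y (Inr (Inl s))) p - 1) c)"
      unfolding \<Theta>_def by (intro sum.cong) auto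
    moreover have "(\<Sum>q<k. w (Rs ! q) (\<Theta> T y (Inr (Inr q))) c) = (\<Sum>q<k. w (Rs ! q) (cl l T (\<lambda>s. y (Inr (Inl s))) q) c)"
      unfolding \<Theta>_def by (intro sum.cong) auto
    moreover have "(\<Sum>j<R. w (rs ! j) (\<Theta> T y (Inl j)) c) = (\<Sum>j<R. w (rs ! j) (y (Inl j)) c)"
      unfolding \<Theta>_def by simp
    ultimately show "(\<Sum>z\<in>JH. w (EH z) (\<Theta> T y z) c)
      = (\<Sum>z\<in>JT T. w (ET z) (y z) c) + (if c = i \<and> \<not> pos then 1 else 0)
        - (if pos then 0 else w (i, n + 1) (y (Inr (Inr 0))) c)"
      unfolding sH sT[OF T] using LI by simp
  qed
  have C1: "\<And>T (y :: nat + (nat \<times> nat) + nat \<Rightarrow> nat). T \<in> NC \<Longrightarrow> y \<in> FL n (JT T) ET t \<Longrightarrow>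
      (\<not> pos \<longrightarrow> y (Inr (Inr 0)) = 0) \<and> (pos \<longrightarrow> rp1 k T (\<lambda>s. y (Inr (Inl s))) l0 = m i)"
  proof -
    fix T and y :: "nat + (nat \<times> nat) + nat \<Rightarrow> nat" assume T: "T \<in> NC" and y: "y \<in> FL n (JT T) ET t"
    have F: "FC l k T" using T NC by auto
    have eq: "(\<Sum>z\<in>JT T. w (ET z) (y z) i) = int (m i)" using y iin ti unfolding FL_def by auto
    have TS: "(\<Sum>s\<in>T. w (ETc Ls Rs i s) (y (Inr (Inl s))) i) = (if pos then int (rp1 k T (\<lambda>s. y (Inr (Inl s))) l0) else 0)"
      using Tsum_i[of Ls pos Rs T i "\<lambda>s. y (Inr (Inl s))"] F vL vR unfolding l_def l0_def k_def by auto
    have "i \<noteq> n + 1" using i by simp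
    then show "(\<not> pos \<longrightarrow> y (Inr (Inr 0)) = 0) \<and> (pos \<longrightarrow> rp1 k T (\<lambda>s. y (Inr (Inl s))) l0 = m i)"
      using eq unfolding sT[OF T] rest_i TS using mi0 unfolding pos_def w_def by auto
  qed
  have C2: "\<And>T (y :: nat + (nat \<times> nat) + nat \<Rightarrow> nat). T \<in> NC \<Longrightarrow> y \<in> FL n (JT T) ET t \<Longrightarrow> \<Theta> T y \<in> FL n JH EH t"
  proof -
    fix T and y :: "nat + (nat \<times> nat) + nat \<Rightarrow> nat" assume T: "T \<in> NC" and y: "y \<in> FL n (JT T) ET t"
    have supp: "\<And>z. z \<notin> JT T \<Longrightarrow> y z = 0" using y unfolding FL_def by auto
    have "\<Theta> T y z = 0" if "z \<notin> JH" for z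
    proof (cases z)
      case (Inl j)
      then have "Inl j \<notin> JT T" using that unfolding JH_def JT_def by auto
      then show ?thesis using supp Inl unfolding \<Theta>_def by auto
    next
      case (Inr z')
      then show ?thesis using that unfolding JH_def \<Theta>_def by (cases z') auto
    qed
    moreover have "(\<Sum>z\<in>JH. w (EH z) (\<Theta> T y z) c) = t c" if c: "c \<in> {1..n+1}" for c
    proof -
      have e: "(\<Sum>z\<in>JT T. w (ET z) (y z) c) = t c" using y c unfolding FL_def by auto
      have "\<not> pos \<Longrightarrow> y (Inr (Inr 0)) = 0" using C1[OF T y] by auto
      then show ?thesis unfolding C0[OF T] e using i by (auto simp: w_def)
    qed
    ultimately show "\<Theta> T y \<in> FL n JH EH t" unfolding FL_def by auto
  qed
  define \<alpha>f :: "(nat + nat + nat \<Rightarrow> nat) \<Rightarrow> nat \<Rightarrow> nat" where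
    "\<alpha>f = (\<lambda>x p. if p < l0 then x (Inr (Inl p)) else m i - 1)"
  define \<beta>f :: "(nat + nat + nat \<Rightarrow> nat) \<Rightarrow> nat \<Rightarrow> nat" where
    "\<beta>f = (\<lambda>x q. x (Inr (Inr q)))"
  have ll: "l = l0 + (if pos then 1 else 0)" unfolding l_def l0_def ..
  have C3: "\<And>T (y :: nat + (nat \<times> nat) + nat \<Rightarrow> nat). T \<in> NC \<Longrightarrow> y \<in> FL n (JT T) ET t \<Longrightarrow>
      SOL l k (\<alpha>f (\<Theta> T y)) (\<beta>f (\<Theta> T y)) T (\<lambda>s. y (Inr (Inl s)))"
  proof -
    fix T and y :: "nat + (nat \<times> nat) + nat \<Rightarrow> nat" assume T: "T \<in> NC" and y: "y \<in> FL n (JT T) ET t"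
    have F: "FC l k T" using T NC by auto
    have supp: "\<And>z. z \<notin> JT T \<Longrightarrow> y z = 0" using y unfolding FL_def by auto
    show "SOL l k (\<alpha>f (\<Theta> T y)) (\<beta>f (\<Theta> T y)) T (\<lambda>s. y (Inr (Inl s)))"
      unfolding SOL_def
    proof (intro conjI allI impI)
      show "FC l k T" by (rule F)
      show "y (Inr (Inl s)) = 0" if "s \<notin> T" for s using supp that unfolding JT_def by auto
      show "rp1 k T (\<lambda>s. y (Inr (Inl s))) p = \<alpha>f (\<Theta> T y) p + 1" if p: "p < l" for p
      proof (cases "p < l0")
        case True
        have "rp1 k T (\<lambda>s. y (Inr (Inl s))) p \<ge> 1" using FC_rp1_pos F l1 k1 p by blast
        then show ?thesis using True unfolding \<alpha>f_def \<Theta>_def by simp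
      next
        case False
        then have "pos" "p = l0" using p ll by (auto split: if_splits)
        then show ?thesis using C1[OF T y] mi1 False unfolding \<alpha>f_def by simp
      qed
      show "cl l T (\<lambda>s. y (Inr (Inl s))) q = \<beta>f (\<Theta> T y) q" if "q < k" for q
        using that unfolding \<beta>f_def \<Theta>_def by simp
    qed
  qed
  have inj: "inj_on (\<lambda>(T, y). \<Theta> T y) (SIGMA T:NC. FL n (JT T) ET t)"
  proof (rule inj_onI, clarify)
    fix T and y :: "nat + (nat \<times> nat) + nat \<Rightarrow> nat" and T' and y' :: "nat + (nat \<times> nat) + nat \<Rightarrow> nat"
    assume T: "T \<in> NC" and y: "y \<in> FL n (JT T) ET t" and T': "T' \<in> NC" and y': "y' \<in> FL n (JT T') ET t"
      and eq: "\<Theta> T y = \<Theta> T' y'"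
    have S1: "SOL l k (\<alpha>f (\<Theta> T y)) (\<beta>f (\<Theta> T y)) T (\<lambda>s. y (Inr (Inl s)))" by (rule C3[OF T y])
    have S2: "SOL l k (\<alpha>f (\<Theta> T y)) (\<beta>f (\<Theta> T y)) T' (\<lambda>s. y' (Inr (Inl s)))" using C3[OF T' y'] eq by simp
    have U: "T = T' \<and> (\<lambda>s. y (Inr (Inl s))) = (\<lambda>s. y' (Inr (Inl s)))" by (rule core_uniq[OF S1 S2 l1 k1])
    have supp: "\<And>z. z \<notin> JT T \<Longrightarrow> y z = 0" using y unfolding FL_def by auto
    have supp': "\<And>z. z \<notin> JT T' \<Longrightarrow> y' z = 0" using y' unfolding FL_def by auto
    have "y z = y' z" for z
    proof (cases z)
      case (Inl j)
      have "\<Theta> T y (Inl j) = \<Theta> T' y' (Inl j)" using eq by simp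
      then show ?thesis using Inl unfolding \<Theta>_def by simp
    next
      case (Inr z')
      show ?thesis
      proof (cases z')
        case (Inl s)
        then show ?thesis using U Inr by (metis)
      next
        case (Inr u)
        show ?thesis
        proof (cases "\<not> pos \<and> u = 0")
          case True
          then show ?thesis using C1[OF T y] C1[OF T' y'] Inr `z = Inr z'` by simp
        next
          case False
          then have "z \<notin> JT T" "z \<notin> JT T'" using Inr `z = Inr z'` unfolding JT_def Z_def by auto
          then show ?thesis using supp supp' by simp
        qed
      qed
    qed
    then show "T = T' \<and> y = y'" using U by auto
  qed
  have surj: "FL n JH EH t \<subseteq> (\<lambda>(T, y). \<Theta> T y) ` (SIGMA T:NC. FL n (JT T) ET t)"
  proof
    fix x assume x: "x \<in> FL n JH EH t"
    have suppx: "\<And>z. z \<notin> JH \<Longrightarrow> x z = 0" using x unfolding FL_def by auto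
    define \<alpha> where "\<alpha> = \<alpha>f x"
    define \<beta> where "\<beta> = \<beta>f x"
    have eqi: "(\<Sum>z\<in>JH. w (EH z) (x z) i) = int (m i)" using x iin ti unfolding FL_def by auto
    have A: "(\<Sum>p<l0. w (Ls ! p) (x (Inr (Inl p))) i) = - (\<Sum>p<l0. int (\<alpha> p))"
      unfolding \<alpha>_def \<alpha>f_def sum_negf[symmetric] using vL by (intro sum.cong) (auto simp: w_def)
    have B: "(\<Sum>q<k. w (Rs ! q) (x (Inr (Inr q))) i) = (\<Sum>q<k. int (\<beta> q)) + int k"
      unfolding \<beta>_def \<beta>f_def using vR by (simp add: w_def sum.distrib)
    have E1: "(\<Sum>q<k. int (\<beta> q)) + int k - (\<Sum>p<l0. int (\<alpha> p)) = int (m i)"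
      using eqi unfolding sH rest_i A B by simp
    have E2: "(\<Sum>p<l. int (\<alpha> p)) = (\<Sum>p<l0. int (\<alpha> p)) + (if pos then int (m i) - 1 else 0)"
      unfolding ll sum_l_split using mi1 unfolding \<alpha>_def \<alpha>f_def by (auto simp: of_nat_diff)
    have "int ((\<Sum>p<l. \<alpha> p) + 1) = int ((\<Sum>q<k. \<beta> q) + k)"
      using E1 E2 mi0 unfolding pos_def of_nat_add of_nat_sum by (cases "a i = 0") auto
    then have sumc: "(\<Sum>p<l. \<alpha> p) + 1 = (\<Sum>q<k. \<beta> q) + k" by (simp only: of_nat_eq_iff)
    obtain T \<phi> where S: "SOL l k \<alpha> \<beta> T \<phi>" using core_ex[OF l1 k1 sumc] by blast
    have T: "T \<in> NC" using S NC unfolding SOL_def by auto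
    define y :: "nat + (nat \<times> nat) + nat \<Rightarrow> nat" where
      "y = (\<lambda>z. case z of Inl j \<Rightarrow> x (Inl j) | Inr (Inl s) \<Rightarrow> \<phi> s | Inr (Inr _) \<Rightarrow> 0)"
    have phy: "(\<lambda>s. y (Inr (Inl s))) = \<phi>" unfolding y_def by simp
    have Th: "\<Theta> T y = x"
    proof
      fix z show "\<Theta> T y z = x z"
      proof (cases z)
        case (Inl j) then show ?thesis unfolding \<Theta>_def y_def by simp
      next
        case (Inr z')
        show ?thesis
        proof (cases z')
          case (Inl p)
          show ?thesis
          proof (cases "p < l0")
            case True
            then have "rp1 k T \<phi> p = \<alpha> p + 1" using S ll unfolding SOL_def by auto
            then show ?thesis using True Inr Inl unfolding \<Theta>_def phy \<alpha>_def \<alpha>f_def by simp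
          next
            case False
            then have "z \<notin> JH" using Inr Inl unfolding JH_def by auto
            then show ?thesis using suppx False Inr Inl unfolding \<Theta>_def by simp
          qed
        next
          case (Inr q)
          show ?thesis
          proof (cases "q < k")
            case True
            then have "cl l T \<phi> q = \<beta> q" using S unfolding SOL_def by auto
            then show ?thesis using True Inr `z = Inr z'` unfolding \<Theta>_def phy \<beta>_def \<beta>f_def by simp
          next
            case False
            then have "z \<notin> JH" using Inr `z = Inr z'` unfolding JH_def by auto
            then show ?thesis using suppx False Inr `z = Inr z'` unfolding \<Theta>_def by simp
          qed
        qed
      qed
    qed
    have yFL: "y \<in> FL n (JT T) ET t"
    proof -
      have "y z = 0" if "z \<notin> JT T" for z
      proof (cases z)
        case (Inl j)
        then have "(Inl j :: nat + nat + nat) \<notin> JH" using that unfolding JH_def JT_def by auto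
        then show ?thesis using suppx Inl unfolding y_def by simp
      next
        case (Inr z')
        show ?thesis
        proof (cases z')
          case (Inl s)
          then have "s \<notin> T" using that Inr unfolding JT_def by auto
          then have "\<phi> s = 0" using S unfolding SOL_def by blast
          then show ?thesis using Inl Inr unfolding y_def by simp
        next
          case (Inr u) then show ?thesis using `z = Inr z'` unfolding y_def by simp
        qed
      qed
      moreover have "(\<Sum>z\<in>JT T. w (ET z) (y z) c) = t c" if c: "c \<in> {1..n+1}" for c
      proof -
        have e: "(\<Sum>z\<in>JH. w (EH z) (x z) c) = t c" using x c unfolding FL_def by auto
        have "y (Inr (Inr 0)) = 0" unfolding y_def by simp
        then show ?thesis using e C0[OF T, of y c] unfolding Th using i by (auto simp: w_def split: if_splits)
      qed
      ultimately show ?thesis unfolding FL_def by auto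
    qed
    show "x \<in> (\<lambda>(T, y). \<Theta> T y) ` (SIGMA T:NC. FL n (JT T) ET t)"
      using T yFL Th by (intro image_eqI[of _ _ "(T, y)"]) auto
  qed
  have "bij_betw (\<lambda>(T, y). \<Theta> T y) (SIGMA T:NC. FL n (JT T) ET t) (FL n JH EH t)"
    unfolding bij_betw_def using inj surj C2 by auto
  then have "card (SIGMA T:NC. FL n (JT T) ET t) = card (FL n JH EH t)" by (rule bij_betw_same_card)
  then show ?thesis using KH sumK unfolding t_def NC_def l_def k_def pos_def by simp
qed



lemma count_Gm: "count (Gm n m) e = (if fst e \<in> {1..n} \<and> snd e = n + 1 then m (fst e) else 0)"
proof -
  obtain x y where e: "e = (x, y)" by (cases e)
  have "Gm n m = (\<Sum>i\<in>{1..n}. replicate_mset (m i) (i, n + 1))"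
    unfolding Gm_def by (simp add: sum_unfold_sum_mset)
  then have "count (Gm n m) e = (\<Sum>i\<in>{1..n}. count (replicate_mset (m i) (i, n + 1)) e)"
    by (simp add: count_sum)
  also have "\<dots> = (\<Sum>i\<in>{1..n}. if i = x then (if y = n + 1 then m i else 0) else 0)"
    unfolding e by (intro sum.cong) (auto simp: count_replicate_mset)
  also have "\<dots> = (if x \<in> {1..n} then (if y = n + 1 then m x else 0) else 0)"
    by (rule sum.delta) simp
  finally show ?thesis unfolding e by auto
qed

lemma leaf_outd:
  assumes L: "\<forall>e\<in>#L. snd e = n + 1 \<and> fst e \<in> {1..n}"
  shows "count L e = (if fst e \<in> {1..n} \<and> snd e = n + 1 then outd L (fst e) else 0)"
proof (cases "fst e \<in> {1..n} \<and> snd e = n + 1")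
  case True
  have "filter_mset (\<lambda>x. fst x = fst e) L = filter_mset (\<lambda>x. x = e) L"
    using L True by (intro filter_mset_cong) (auto simp: prod_eq_iff)
  then have "outd L (fst e) = count L e" unfolding outd_def by (simp add: filter_eq_replicate_mset)
  then show ?thesis using True by simp
next
  case False
  then have "e \<notin># L" using L by auto
  then have "count L e = 0" by (simp add: not_in_iff)
  then show ?thesis by (simp only: if_not_P[OF False])
qed

lemma leaf_eq_Gm:
  assumes L: "\<forall>e\<in>#L. snd e = n + 1 \<and> fst e \<in> {1..n}"
  shows "L = Gm n m \<longleftrightarrow> (\<forall>c\<in>{1..n}. outd L c = m c)"
proof
  assume "L = Gm n m"
  then have "\<And>c. c \<in> {1..n} \<Longrightarrow> count L (c, n + 1) = m c" using count_Gm by simp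
  then show "\<forall>c\<in>{1..n}. outd L c = m c" using leaf_outd[OF L] by (metis fst_conv snd_conv)
next
  assume "\<forall>c\<in>{1..n}. outd L c = m c"
  then show "L = Gm n m" unfolding multiset_eq_iff using leaf_outd[OF L] count_Gm by simp
qed

lemma leaf_Kt:
  assumes L: "\<forall>e\<in>#L. snd e = n + 1 \<and> fst e \<in> {1..n}"
  shows "Kt n (tg n m) L = (if L = Gm n m then 1 else 0)"
proof -
  define es where "es = sorted_list_of_multiset L"
  have len: "length es = size L" unfolding es_def by (metis mset_sorted_list_of_multiset size_mset)
  have mes: "mset es = L" unfolding es_def by simp
  have ej: "\<And>j. j < size L \<Longrightarrow> snd (es ! j) = n + 1 \<and> fst (es ! j) \<in> {1..n}"
  proof -
    fix j assume "j < size L"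
    then have "es ! j \<in># L" using len mes by (metis nth_mem set_mset_mset)
    then show "snd (es ! j) = n + 1 \<and> fst (es ! j) \<in> {1..n}" using L by auto
  qed
  have zero: "\<And>x. x \<in> FL n {..<size L} (\<lambda>j. es ! j) (tg n m) \<Longrightarrow> x = (\<lambda>_. 0)"
  proof
    fix x j assume x: "x \<in> FL n {..<size L} (\<lambda>j. es ! j) (tg n m)"
    have "(\<Sum>j<size L. w (es ! j) (x j) (n + 1)) = tg n m (n + 1)" using x unfolding FL_def by auto
    moreover have "(\<Sum>j<size L. w (es ! j) (x j) (n + 1)) = (\<Sum>j<size L. - int (x j))"
    proof (rule sum.cong)
      fix j assume "j \<in> {..<size L}"
      then have "snd (es ! j) = n + 1" "fst (es ! j) \<noteq> n + 1" using ej[of j] by auto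
      then show "w (es ! j) (x j) (n + 1) = - int (x j)" unfolding w_def by simp
    qed simp
    moreover have "tg n m (n + 1) = 0" unfolding tg_def by simp
    ultimately have "(\<Sum>j<size L. - int (x j)) = 0" by simp
    then have "(\<Sum>j<size L. int (x j)) = 0" by (simp add: sum_negf)
    then have "\<forall>j\<in>{..<size L}. int (x j) = 0" by (subst sum_nonneg_eq_0_iff[symmetric]) auto
    then show "x j = (\<lambda>_. 0) j" using x unfolding FL_def by (cases "j < size L") auto
  qed
  have z: "(\<lambda>_. 0) \<in> FL n {..<size L} (\<lambda>j. es ! j) (tg n m) \<longleftrightarrow> (\<forall>c\<in>{1..n}. outd L c = m c)"
  proof -
    have s: "\<And>c. (\<Sum>j<size L. w (es ! j) 0 c) = int (outd L c)"
      using sum_w_netflow[of L "\<lambda>_. 0"] unfolding es_def netflow_def Let_def by simp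
    have o: "outd L (n + 1) = 0"
    proof -
      have "filter_mset (\<lambda>e. fst e = n + 1) L = {#}" using L unfolding multiset_eq_iff
        by (auto simp: count_eq_zero_iff)
      then show ?thesis unfolding outd_def by simp
    qed
    show ?thesis unfolding FL_def tg_def using o by (auto simp: s le_Suc_eq)
  qed
  have "FL n {..<size L} (\<lambda>j. es ! j) (tg n m) = (if (\<forall>c\<in>{1..n}. outd L c = m c) then {\<lambda>_. 0} else {})"
    using zero z by auto
  then show ?thesis unfolding Kt_def es_def[symmetric] using leaf_eq_Gm[OF L] by simp
qed



lemma rc_form:
  assumes V: "\<forall>e\<in>#H. validE n e"
    and mL: "mset Ls = filter_mset (\<lambda>e. snd e = i) H"
    and mR: "mset Rs = filter_mset (\<lambda>e. fst e = i) H"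
  shows "reduce_child n a Ls Rs H i T = filter_mset (\<lambda>e. snd e \<noteq> i \<and> fst e \<noteq> i) H
     + image_mset (ETc Ls Rs i) (mset_set T) + (if a i = 0 then {#(i, n + 1)#} else {#})"
proof -
  have "(\<lambda>(p, q). if p < length Ls then (fst (Ls ! p), snd (Rs ! q)) else (i, snd (Rs ! q))) = ETc Ls Rs i"
    unfolding ETc_def by auto
  moreover have "H - mset Ls - mset Rs = filter_mset (\<lambda>e. snd e \<noteq> i \<and> fst e \<noteq> i) H"
    using H_decomp(2)[OF V, of i] mL mR by simp
  ultimately show ?thesis unfolding reduce_child_def by simp
qed

definition Inv :: "nat \<Rightarrow> (nat \<Rightarrow> nat) \<Rightarrow> graph \<Rightarrow> nat \<Rightarrow> graph \<Rightarrow> bool" where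
  "Inv n a G j H \<longleftrightarrow>
     (\<forall>e\<in>#H. validE n e) \<and>
     (\<forall>e\<in>#H. snd e < j \<or> snd e = n + 1) \<and>
     (\<forall>x<j. filter_mset (\<lambda>e. snd e = x) H = filter_mset (\<lambda>e. snd e = x) G) \<and>
     (\<forall>x. 1 \<le> x \<and> x < j \<and> x \<le> n \<longrightarrow> (\<exists>e\<in>#H. fst e = x)) \<and>
     (\<forall>x. j \<le> x \<and> x \<le> n \<and> a x = 0 \<and> (\<exists>e\<in>#G. snd e = x) \<longrightarrow> filter_mset (\<lambda>e. fst e = x) H = {#(x, n + 1)#})"

lemma Inv_skip:
  assumes I: "Inv n a G (Suc i) H" and no: "\<not> (\<exists>e\<in>#H. snd e = i)"
  shows "Inv n a G i H"
proof -
  have U: "filter_mset (\<lambda>e. snd e = i) H = filter_mset (\<lambda>e. snd e = i) G" using I unfolding Inv_def by auto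
  have noG: "\<not> (\<exists>e\<in>#G. snd e = i)"
  proof
    assume "\<exists>e\<in>#G. snd e = i"
    then obtain e where e: "e \<in># G" "snd e = i" by blast
    then have "e \<in># filter_mset (\<lambda>e. snd e = i) G" by simp
    then have "e \<in># filter_mset (\<lambda>e. snd e = i) H" using U by simp
    then show False using no by auto
  qed
  show ?thesis unfolding Inv_def
  proof (intro conjI allI impI ballI)
    show "\<And>e. e \<in># H \<Longrightarrow> validE n e" using I unfolding Inv_def by auto
    show "snd e < i \<or> snd e = n + 1" if e: "e \<in># H" for e
    proof -
      have "snd e < Suc i \<or> snd e = n + 1" using I e unfolding Inv_def by blast
      moreover have "snd e \<noteq> i" using no e by blast
      ultimately show ?thesis by linarith
    qed
    show "\<And>x. x < i \<Longrightarrow> filter_mset (\<lambda>e. snd e = x) H = filter_mset (\<lambda>e. snd e = x) G"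
      using I unfolding Inv_def by auto
    show "\<And>x. 1 \<le> x \<and> x < i \<and> x \<le> n \<Longrightarrow> \<exists>e\<in>#H. fst e = x"
      using I unfolding Inv_def by auto
    fix x assume x: "i \<le> x \<and> x \<le> n \<and> a x = 0 \<and> (\<exists>e\<in>#G. snd e = x)"
    then have "x \<noteq> i" using noG by auto
    then show "filter_mset (\<lambda>e. fst e = x) H = {#(x, n + 1)#}" using I x unfolding Inv_def by auto
  qed
qed

lemma filter_none: "(\<And>e. e \<in># M \<Longrightarrow> \<not> P e) \<Longrightarrow> filter_mset P M = {#}"
  by (induction M) auto

lemma Inv_reduce:
  assumes I: "Inv n a G (Suc i) H" and i: "2 \<le> i" "i \<le> n"
    and mL: "mset Ls = filter_mset (\<lambda>e. snd e = i) H" and mR: "mset Rs = filter_mset (\<lambda>e. fst e = i) H"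
    and yes: "\<exists>e\<in>#H. snd e = i"
    and T: "FC (length Ls + (if a i > 0 then 1 else 0)) (length Rs) T"
  shows "Inv n a G i (reduce_child n a Ls Rs H i T)"
proof -
  define l0 where "l0 = length Ls"
  define k where "k = length Rs"
  define l where "l = length Ls + (if a i > 0 then 1 else 0)"
  define X where "X = (if a i = 0 then {#(i, n + 1)#} else {#})"
  define rest where "rest = filter_mset (\<lambda>e. snd e \<noteq> i \<and> fst e \<noteq> i) H"
  have V: "\<forall>e\<in>#H. validE n e" using I unfolding Inv_def by auto
  have P: "\<And>e. e \<in># H \<Longrightarrow> snd e < Suc i \<or> snd e = n + 1" using I unfolding Inv_def by auto
  have H': "reduce_child n a Ls Rs H i T = rest + image_mset (ETc Ls Rs i) (mset_set T) + X"
    unfolding rest_def X_def by (rule rc_form[OF V mL mR])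
  have Lne: "Ls \<noteq> []"
  proof -
    obtain e where "e \<in># H" "snd e = i" using yes by blast
    then have "e \<in># mset Ls" unfolding mL by simp
    then show ?thesis by auto
  qed
  have "\<exists>e\<in>#H. fst e = i" using I i unfolding Inv_def by auto
  then have Rne: "Rs \<noteq> []"
  proof -
    assume "\<exists>e\<in>#H. fst e = i"
    then obtain e where "e \<in># H" "fst e = i" by blast
    then have "e \<in># mset Rs" unfolding mR by simp
    then show ?thesis by auto
  qed
  have l1: "l \<ge> 1" and k1: "k \<ge> 1" using Lne Rne unfolding l_def k_def by (auto simp: Suc_le_eq)
  have sub: "T \<subseteq> {..<l} \<times> {..<k}" and finT: "finite T" using T FC_finite unfolding FC_def l_def k_def by auto
  have vR: "\<And>q. q < k \<Longrightarrow> fst (Rs ! q) = i \<and> snd (Rs ! q) = n + 1"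
  proof -
    fix q assume "q < k"
    then have "Rs ! q \<in># mset Rs" unfolding k_def by simp
    then have e: "Rs ! q \<in># H" "fst (Rs ! q) = i" unfolding mR by auto
    then have "snd (Rs ! q) > i" using V unfolding validE_def by force
    then show "fst (Rs ! q) = i \<and> snd (Rs ! q) = n + 1" using P[OF e(1)] e by auto
  qed
  have vL: "\<And>p. p < l0 \<Longrightarrow> snd (Ls ! p) = i \<and> 1 \<le> fst (Ls ! p) \<and> fst (Ls ! p) < i \<and> Ls ! p \<in># H"
  proof -
    fix p assume "p < l0"
    then have "Ls ! p \<in># mset Ls" unfolding l0_def by simp
    then have e: "Ls ! p \<in># H" "snd (Ls ! p) = i" unfolding mL by auto
    then show "snd (Ls ! p) = i \<and> 1 \<le> fst (Ls ! p) \<and> fst (Ls ! p) < i \<and> Ls ! p \<in># H"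
      using V unfolding validE_def by force
  qed
  have ET: "\<And>t. t \<in> T \<Longrightarrow> snd (ETc Ls Rs i t) = n + 1 \<and> 1 \<le> fst (ETc Ls Rs i t) \<and> fst (ETc Ls Rs i t) \<le> i
        \<and> (fst (ETc Ls Rs i t) = i \<longrightarrow> a i > 0)"
  proof -
    fix t assume t: "t \<in> T"
    obtain p q where pq: "t = (p, q)" by (cases t)
    have pl: "p < l" and qk: "q < k" using sub t pq by auto
    have s: "snd (ETc Ls Rs i t) = n + 1" using vR[OF qk] unfolding ETc_def pq by simp
    show "snd (ETc Ls Rs i t) = n + 1 \<and> 1 \<le> fst (ETc Ls Rs i t) \<and> fst (ETc Ls Rs i t) \<le> i
        \<and> (fst (ETc Ls Rs i t) = i \<longrightarrow> a i > 0)"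
    proof (cases "p < l0")
      case True
      then have "fst (ETc Ls Rs i t) = fst (Ls ! p)" unfolding ETc_def pq l0_def by simp
      then show ?thesis using vL[OF True] s by simp
    next
      case False
      then have f: "fst (ETc Ls Rs i t) = i" unfolding ETc_def pq l0_def by simp
      have "a i > 0" using False pl unfolding l_def l0_def by (cases "a i > 0") auto
      then show ?thesis using f s i by simp
    qed
  qed
  have mem: "\<And>e. e \<in># reduce_child n a Ls Rs H i T \<Longrightarrow>
      (e \<in># H \<and> snd e \<noteq> i \<and> fst e \<noteq> i) \<or> (\<exists>t\<in>T. e = ETc Ls Rs i t) \<or> (a i = 0 \<and> e = (i, n + 1))"
  proof -
    fix e assume "e \<in># reduce_child n a Ls Rs H i T"
    then consider "e \<in># rest" | "e \<in># image_mset (ETc Ls Rs i) (mset_set T)" | "e \<in># X"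
      unfolding H' by auto
    then show "(e \<in># H \<and> snd e \<noteq> i \<and> fst e \<noteq> i) \<or> (\<exists>t\<in>T. e = ETc Ls Rs i t) \<or> (a i = 0 \<and> e = (i, n + 1))"
    proof cases
      case 1 then show ?thesis unfolding rest_def by simp
    next
      case 2 then show ?thesis using finT by auto
    next
      case 3 then show ?thesis unfolding X_def by (simp split: if_splits)
    qed
  qed
  show ?thesis unfolding Inv_def
  proof (intro conjI allI impI ballI)
    fix e assume e: "e \<in># reduce_child n a Ls Rs H i T"
    from mem[OF e] consider "e \<in># H \<and> snd e \<noteq> i \<and> fst e \<noteq> i" | t where "t \<in> T" "e = ETc Ls Rs i t"
      | "a i = 0 \<and> e = (i, n + 1)" by blast
    then have "validE n e \<and> (snd e < i \<or> snd e = n + 1)"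
    proof cases
      case 1 then show ?thesis using V P[of e] by auto
    next
      case (2 t) then show ?thesis using ET[OF 2(1)] i unfolding validE_def by auto
    next
      case 3 then show ?thesis using i unfolding validE_def by auto
    qed
    then show "validE n e" "snd e < i \<or> snd e = n + 1" by auto
  next
    fix x assume x: "x < i"
    have "filter_mset (\<lambda>e. snd e = x) (reduce_child n a Ls Rs H i T) = filter_mset (\<lambda>e. snd e = x) H"
    proof -
      have "filter_mset (\<lambda>e. snd e = x) rest = filter_mset (\<lambda>e. snd e = x) H"
        unfolding rest_def filter_filter_mset
      proof (rule filter_mset_cong)
        fix e assume "e \<in># H"
        then show "((snd e \<noteq> i \<and> fst e \<noteq> i) \<and> snd e = x) = (snd e = x)" using V x unfolding validE_def by force
      qed simp
      moreover have "filter_mset (\<lambda>e. snd e = x) (image_mset (ETc Ls Rs i) (mset_set T)) = {#}"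
        proof (rule filter_none)
          fix e assume "e \<in># image_mset (ETc Ls Rs i) (mset_set T)"
          then obtain t where t: "t \<in> T" "e = ETc Ls Rs i t" using finT by auto
          then show "\<not> (snd e = x)" using ET[OF t(1)] x i by auto
        qed
      moreover have "filter_mset (\<lambda>e. snd e = x) X = {#}" unfolding X_def using x i by auto
      ultimately show ?thesis unfolding H' by simp
    qed
    then show "filter_mset (\<lambda>e. snd e = x) (reduce_child n a Ls Rs H i T) = filter_mset (\<lambda>e. snd e = x) G"
      using I x unfolding Inv_def by auto
  next
    fix x assume x: "1 \<le> x \<and> x < i \<and> x \<le> n"
    have O: "\<And>x. 1 \<le> x \<Longrightarrow> x < Suc i \<Longrightarrow> x \<le> n \<Longrightarrow> \<exists>e\<in>#H. fst e = x"
      using I unfolding Inv_def by blast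
    obtain e where e: "e \<in># H" "fst e = x" using O[of x] x by auto
    show "\<exists>e\<in>#reduce_child n a Ls Rs H i T. fst e = x"
    proof (cases "snd e = i")
      case False
      then have "e \<in># rest" using e x unfolding rest_def by auto
      then show ?thesis using e unfolding H' by auto
    next
      case True
      then have "e \<in># mset Ls" using e mL by simp
      then have "e \<in> set Ls" by simp
      then obtain p where p: "p < l0" "Ls ! p = e" unfolding l0_def using in_set_conv_nth[of e Ls] by blast
      then have "p < l" unfolding l_def l0_def by simp
      then obtain q where q: "(p, q) \<in> T" using FC_rows[of l k T p] T l1 k1 unfolding l_def k_def by blast
      have "fst (ETc Ls Rs i (p, q)) = x" using p e unfolding ETc_def l0_def by simp
      moreover have "ETc Ls Rs i (p, q) \<in># reduce_child n a Ls Rs H i T" using q finT unfolding H' by simp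
      ultimately show ?thesis by blast
    qed
  next
    fix x assume x: "i \<le> x \<and> x \<le> n \<and> a x = 0 \<and> (\<exists>e\<in>#G. snd e = x)"
    show "filter_mset (\<lambda>e. fst e = x) (reduce_child n a Ls Rs H i T) = {#(x, n + 1)#}"
    proof (cases "x = i")
      case True
      have "filter_mset (\<lambda>e. fst e = x) rest = {#}" unfolding rest_def using True by (intro filter_none) auto
      moreover have "filter_mset (\<lambda>e. fst e = x) (image_mset (ETc Ls Rs i) (mset_set T)) = {#}"
        proof (rule filter_none)
          fix e assume "e \<in># image_mset (ETc Ls Rs i) (mset_set T)"
          then obtain t where t: "t \<in> T" "e = ETc Ls Rs i t" using finT by auto
          then show "\<not> (fst e = x)" using ET[OF t(1)] x True by auto
        qed
      moreover have "filter_mset (\<lambda>e. fst e = x) X = {#(x, n + 1)#}" unfolding X_def using x True by simp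
      ultimately show ?thesis unfolding H' by simp
    next
      case False
      then have xi: "x > i" using x by simp
      have "filter_mset (\<lambda>e. fst e = x) rest = filter_mset (\<lambda>e. fst e = x) H"
        unfolding rest_def filter_filter_mset
      proof (rule filter_mset_cong)
        fix e assume "e \<in># H"
        then show "((snd e \<noteq> i \<and> fst e \<noteq> i) \<and> fst e = x) = (fst e = x)" using V xi unfolding validE_def by force
      qed simp
      moreover have "filter_mset (\<lambda>e. fst e = x) (image_mset (ETc Ls Rs i) (mset_set T)) = {#}"
        proof (rule filter_none)
          fix e assume "e \<in># image_mset (ETc Ls Rs i) (mset_set T)"
          then obtain t where t: "t \<in> T" "e = ETc Ls Rs i t" using finT by auto
          then show "\<not> (fst e = x)" using ET[OF t(1)] xi by auto
        qed
      moreover have "filter_mset (\<lambda>e. fst e = x) X = {#}" unfolding X_def using xi by auto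
      moreover have "filter_mset (\<lambda>e. fst e = x) H = {#(x, n + 1)#}" using I x xi unfolding Inv_def by auto
      ultimately show ?thesis unfolding H' by simp
    qed
  qed
qed



definition St :: "nat \<Rightarrow> (nat \<Rightarrow> nat) \<Rightarrow> (graph \<Rightarrow> nat \<Rightarrow> edge list) \<Rightarrow> (graph \<Rightarrow> nat \<Rightarrow> edge list)
     \<Rightarrow> graph \<Rightarrow> nat \<Rightarrow> graph multiset" where
  "St n a ordI ordO G j = foldr (\<lambda>i Hs. reduce_step n a ordI ordO i Hs) [j..<Suc n] {#G#}"

lemma canon_St: "canon_leaves n a ordI ordO G = St n a ordI ordO G 2"
  unfolding canon_leaves_def St_def foldl_conv_foldr by simp

lemma St_top: "n < j \<Longrightarrow> St n a ordI ordO G j = {#G#}"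
  unfolding St_def by simp

lemma St_step: "j \<le> n \<Longrightarrow> St n a ordI ordO G j = reduce_step n a ordI ordO j (St n a ordI ordO G (Suc j))"
proof -
  assume j: "j \<le> n"
  have eq: "[j..<Suc n] = j # [Suc j..<Suc n]" using j by (intro upt_conv_Cons) simp
  show ?thesis unfolding St_def eq by (simp only: foldr_Cons o_apply)
qed

lemma sum_image_sum:
  "sum_mset (image_mset g (sum_mset (image_mset f M))) = sum_mset (image_mset (\<lambda>x. sum_mset (image_mset g (f x))) M)"
  by (induction M) auto

lemma count_as_sum: "count M x = sum_mset (image_mset (\<lambda>y. if y = x then 1 else 0) M)"
  by (induction M) auto

lemma standing_valid: "standing n G \<Longrightarrow> \<forall>e\<in>#G. validE n e"
  unfolding standing_def validE_def by auto

lemma Inv_init: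
  assumes S: "standing n G" and j: "n < j"
  shows "Inv n a G j G"
  unfolding Inv_def
proof (intro conjI allI impI ballI)
  show "\<And>e. e \<in># G \<Longrightarrow> validE n e" using standing_valid[OF S] by auto
  show "\<And>e. e \<in># G \<Longrightarrow> snd e < j \<or> snd e = n + 1" using S j unfolding standing_def by fastforce
  show "\<And>x. x < j \<Longrightarrow> filter_mset (\<lambda>e. snd e = x) G = filter_mset (\<lambda>e. snd e = x) G" by simp
  show "\<And>x. 1 \<le> x \<and> x < j \<and> x \<le> n \<Longrightarrow> \<exists>e\<in>#G. fst e = x" using S unfolding standing_def by auto
  show "\<And>x. j \<le> x \<and> x \<le> n \<and> a x = 0 \<and> (\<exists>e\<in>#G. snd e = x) \<Longrightarrow> filter_mset (\<lambda>e. fst e = x) G = {#(x, n + 1)#}"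
    using j by auto
qed

lemma stage:
  assumes S: "standing n G"
    and oI: "\<And>H i. mset (ordI H i) = filter_mset (\<lambda>e. snd e = i) H"
    and oO: "\<And>H i. mset (ordO H i) = filter_mset (\<lambda>e. fst e = i) H"
    and mpos: "\<And>i. i \<in> {1..n} \<Longrightarrow> m i > 0"
  shows "2 \<le> j \<Longrightarrow> (\<forall>H\<in>#St n a ordI ordO G j. Inv n a G j H) \<and>
    ((\<forall>x. 2 \<le> x \<and> x \<le> n \<and> a x = 0 \<and> (\<exists>e\<in>#G. snd e = x) \<longrightarrow> m x = 1) \<longrightarrow>
      sum_mset (image_mset (Kt n (tg n m)) (St n a ordI ordO G j)) = Kt n (tg n m) G)"
proof (induction "n + 1 - j" arbitrary: j)
  case 0
  then have "n < j" by simp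
  then show ?case using St_top Inv_init[OF S] by simp
next
  case (Suc d)
  then have jn: "j \<le> n" and j2: "2 \<le> j" by auto
  have IH: "(\<forall>H\<in>#St n a ordI ordO G (Suc j). Inv n a G (Suc j) H) \<and>
    ((\<forall>x. 2 \<le> x \<and> x \<le> n \<and> a x = 0 \<and> (\<exists>e\<in>#G. snd e = x) \<longrightarrow> m x = 1) \<longrightarrow>
      sum_mset (image_mset (Kt n (tg n m)) (St n a ordI ordO G (Suc j))) = Kt n (tg n m) G)"
    using Suc by auto
  define F where "F = (\<lambda>H. if (\<exists>e\<in>#H. snd e = j) then reduce_children n a ordI ordO j H else {#H#})"
  have Sj: "St n a ordI ordO G j = sum_mset (image_mset F (St n a ordI ordO G (Suc j)))"
    unfolding St_step[OF jn] reduce_step_def F_def ..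
  define NCH where "NCH = (\<lambda>H. nc_trees (length (ordI H j) + (if a j > 0 then 1 else 0)) (length (ordO H j)))"
  have finNC: "\<And>H. finite (NCH H)"
  proof -
    fix H
    show "finite (NCH H)"
      by (rule finite_subset[of _ "Pow ({..<length (ordI H j) + (if a j > 0 then 1 else 0)} \<times> {..<length (ordO H j)})"])
        (auto simp: NCH_def nc_trees_def)
  qed
  have RC: "\<And>H. reduce_children n a ordI ordO j H = image_mset (reduce_child n a (ordI H j) (ordO H j) H j) (mset_set (NCH H))"
    unfolding reduce_children_def NCH_def Let_def by simp
  have inv: "\<forall>H'\<in>#St n a ordI ordO G j. Inv n a G j H'"
  proof
    fix H' assume "H' \<in># St n a ordI ordO G j"
    then obtain H where H: "H \<in># St n a ordI ordO G (Suc j)" "H' \<in># F H" unfolding Sj by (auto simp: in_Union_mset_iff)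
    have IH': "Inv n a G (Suc j) H" using IH H(1) by auto
    show "Inv n a G j H'"
    proof (cases "\<exists>e\<in>#H. snd e = j")
      case True
      then have "H' \<in># reduce_children n a ordI ordO j H" using H(2) unfolding F_def by simp
      then obtain T where T: "T \<in> NCH H" "H' = reduce_child n a (ordI H j) (ordO H j) H j T"
        unfolding RC using finNC by auto
      have FT: "FC (length (ordI H j) + (if a j > 0 then 1 else 0)) (length (ordO H j)) T"
        using T(1) unfolding NCH_def nc_trees_def FC_def chainT_def by auto
      show ?thesis unfolding T(2) by (rule Inv_reduce[OF IH' j2 jn oI oO True FT])
    next
      case False
      then have "H' = H" using H(2) unfolding F_def by simp
      then show ?thesis using Inv_skip[OF IH' False] by simp
    qed
  qed
  have sum: "sum_mset (image_mset (Kt n (tg n m)) (St n a ordI ordO G j)) = Kt n (tg n m) G"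
    if compat: "\<forall>x. 2 \<le> x \<and> x \<le> n \<and> a x = 0 \<and> (\<exists>e\<in>#G. snd e = x) \<longrightarrow> m x = 1"
  proof -
    have per: "sum_mset (image_mset (Kt n (tg n m)) (F H)) = Kt n (tg n m) H"
      if H: "H \<in># St n a ordI ordO G (Suc j)" for H
    proof (cases "\<exists>e\<in>#H. snd e = j")
      case True
      have IH': "Inv n a G (Suc j) H" using IH H by auto
      have V: "\<forall>e\<in>#H. validE n e" using IH' unfolding Inv_def by auto
      have Lne: "ordI H j \<noteq> []"
      proof -
        obtain e where "e \<in># H" "snd e = j" using True by blast
        then have "e \<in># mset (ordI H j)" unfolding oI by simp
        then show ?thesis by auto
      qed
      have Rne: "ordO H j \<noteq> []"
      proof -
        have O: "\<And>x. 1 \<le> x \<Longrightarrow> x < Suc j \<Longrightarrow> x \<le> n \<Longrightarrow> \<exists>e\<in>#H. fst e = x"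
          using IH' unfolding Inv_def by blast
        obtain e where "e \<in># H" "fst e = j" using O[of j] j2 jn by auto
        then have "e \<in># mset (ordO H j)" unfolding oO by simp
        then show ?thesis by auto
      qed
      have Gin: "\<exists>e\<in>#G. snd e = j"
      proof -
        have U: "filter_mset (\<lambda>e. snd e = j) H = filter_mset (\<lambda>e. snd e = j) G" using IH' unfolding Inv_def by auto
        obtain e where "e \<in># H" "snd e = j" using True by blast
        then have "e \<in># filter_mset (\<lambda>e. snd e = j) H" by simp
        then have "e \<in># filter_mset (\<lambda>e. snd e = j) G" using U by simp
        then show ?thesis by auto
      qed
      have mi0: "a j = 0 \<Longrightarrow> m j = 1" using compat Gin j2 jn by auto
      have mi1: "m j \<ge> 1" using mpos[of j] j2 jn by auto
      have j1: "1 \<le> j" using j2 by simp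
      have "sum_mset (image_mset (Kt n (tg n m)) (F H))
          = (\<Sum>T\<in>NCH H. Kt n (tg n m) (reduce_child n a (ordI H j) (ordO H j) H j T))"
        unfolding F_def using True RC by (simp add: sum_unfold_sum_mset multiset.map_comp comp_def)
      also have "\<dots> = Kt n (tg n m) H"
        unfolding NCH_def
        using step_identity[where H=H and Ls="ordI H j" and Rs="ordO H j" and a=a and m=m and i=j and n=n,
          OF V oI[of H j] oO[of H j] j1 jn Lne Rne mi0 mi1] by simp
      finally show ?thesis .
    next
      case False
      then show ?thesis unfolding F_def by simp
    qed
    have "sum_mset (image_mset (Kt n (tg n m)) (St n a ordI ordO G j))
        = sum_mset (image_mset (\<lambda>H. sum_mset (image_mset (Kt n (tg n m)) (F H))) (St n a ordI ordO G (Suc j)))"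
      unfolding Sj by (rule sum_image_sum)
    also have "\<dots> = sum_mset (image_mset (Kt n (tg n m)) (St n a ordI ordO G (Suc j)))"
      using per by (intro arg_cong[where f=sum_mset] image_mset_cong) auto
    also have "\<dots> = Kt n (tg n m) G" using IH compat by auto
    finally show ?thesis .
  qed
  show ?case using inv sum by auto
qed

theorem lemma4p1:
  fixes n :: nat and G :: graph and a m :: "nat \<Rightarrow> nat"
    and ordI ordO :: "graph \<Rightarrow> nat \<Rightarrow> edge list"
  assumes "standing n G"
    and "\<And>H i. mset (ordI H i) = filter_mset (\<lambda>e. snd e = i) H"
    and "\<And>H i. mset (ordO H i) = filter_mset (\<lambda>e. fst e = i) H"
    and "\<And>i. i \<in> {1..n} \<Longrightarrow> m i > 0"
    and "count (canon_leaves n a ordI ordO G) (Gm n m) > 0"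
  shows "count (canon_leaves n a ordI ordO G) (Gm n m)
         = K n G (\<lambda>k. if k \<in> {1..n} then int (m k) - int (outd G k) else 0)"
proof -
  note S = assms(1) and oI = assms(2) and oO = assms(3) and mpos = assms(4) and cnt = assms(5)
  define L2 where "L2 = St n a ordI ordO G 2"
  have C: "canon_leaves n a ordI ordO G = L2" unfolding L2_def by (rule canon_St)
  have ST: "(\<forall>H\<in>#L2. Inv n a G 2 H) \<and>
    ((\<forall>x. 2 \<le> x \<and> x \<le> n \<and> a x = 0 \<and> (\<exists>e\<in>#G. snd e = x) \<longrightarrow> m x = 1) \<longrightarrow>
      sum_mset (image_mset (Kt n (tg n m)) L2) = Kt n (tg n m) G)"
    unfolding L2_def using stage[OF S oI oO mpos, where j="2::nat"] by simp
  have leaf: "\<And>L. L \<in># L2 \<Longrightarrow> \<forall>e\<in>#L. snd e = n + 1 \<and> fst e \<in> {1..n}"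
  proof -
    fix L assume "L \<in># L2"
    then have I: "Inv n a G 2 L" using ST by auto
    show "\<forall>e\<in>#L. snd e = n + 1 \<and> fst e \<in> {1..n}"
    proof
      fix e assume e: "e \<in># L"
      have "validE n e" "snd e < 2 \<or> snd e = n + 1" using I e unfolding Inv_def by auto
      then show "snd e = n + 1 \<and> fst e \<in> {1..n}" unfolding validE_def by auto
    qed
  qed
  have inL: "Gm n m \<in># L2" using cnt C by (simp add: count_greater_zero_iff)
  have compat: "\<forall>x. 2 \<le> x \<and> x \<le> n \<and> a x = 0 \<and> (\<exists>e\<in>#G. snd e = x) \<longrightarrow> m x = 1"
  proof (intro allI impI)
    fix x assume x: "2 \<le> x \<and> x \<le> n \<and> a x = 0 \<and> (\<exists>e\<in>#G. snd e = x)"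
    have I: "Inv n a G 2 (Gm n m)" using ST inL by auto
    then have "filter_mset (\<lambda>e. fst e = x) (Gm n m) = {#(x, n + 1)#}" using x unfolding Inv_def by auto
    then have "count (filter_mset (\<lambda>e. fst e = x) (Gm n m)) (x, n + 1) = 1" by simp
    then have "count (Gm n m) (x, n + 1) = 1" by simp
    then show "m x = 1" using count_Gm[of n m "(x, n + 1)"] x by simp
  qed
  have sumK: "sum_mset (image_mset (Kt n (tg n m)) L2) = Kt n (tg n m) G" using ST compat by auto
  have "count L2 (Gm n m) = sum_mset (image_mset (\<lambda>y. if y = Gm n m then 1 else 0) L2)"
    by (rule count_as_sum)
  also have "\<dots> = sum_mset (image_mset (Kt n (tg n m)) L2)"
    using leaf_Kt leaf by (intro arg_cong[where f=sum_mset] image_mset_cong) auto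
  also have "\<dots> = Kt n (tg n m) G" by (rule sumK)
  also have "\<dots> = K n G (\<lambda>k. if k \<in> {1..n} then int (m k) - int (outd G k) else 0)"
    using K_Kt[OF standing_valid[OF S]] by simp
  finally show ?thesis unfolding C .
qed


end
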